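(* Let $X$ be a real Banach space whose dual $X^*$ is isometrically isomorphic to $L_1(\mu)$ for some measure $\mu$. If $X$ is octahedral, then for every $x_1,\dots,x_k\in S_X$ and every $\varepsilon>0$ there exists a sequence $(x_n^{**})_{n\in\mathbb N}\subseteq S_{X^{**}}$ such that (1) $(x_n^{**})$ is isometrically equivalent to the unit vector basis of $c_0$, i.e. $\|\sum_{j=1}^n\lambda_jx_j^{**}\|=\max_j|\lambda_j|$ for all scalars; and (2) $\|x_i+v\|>1-\varepsilon+\|v\|$ for every $1\le i\le k$ and every $v\in\overline{\operatorname{span}}\{x_n^{**}:n\in\mathbb N\}$ (norm computed in $X^{**}$, with $X$ canonically embedded).
   Context: A Banach space $W$ is octahedral if for every finite dimensional subspace $E$ of $W$ and every $\varepsilon>0$ there exists $y\in W$, $\|y\|=1$, with $\|x+\lambda y\|\ge(1-\varepsilon)(\|x\|+|\lambda|)$ for all $x\in E$, $\lambda\in\mathbb R$. $S_W$ is the unit sphere of $W$. *)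

theory Defs
  imports "HOL-Analysis.Analysis"
begin

text \<open>Octahedrality of the normed space whose carrier is the type 'a.
  A finite-dimensional subspace is written as the span of a finite set.\<close>
definition octahedral :: "'a::real_normed_vector itself \<Rightarrow> bool" where
  "octahedral _ \<longleftrightarrow>
     (\<forall>F::'a set. finite F \<longrightarrow> (\<forall>\<epsilon>>0. \<exists>y. norm y = 1 \<and>
        (\<forall>x\<in>span F. \<forall>t::real. norm (x + t *\<^sub>R y) \<ge> (1 - \<epsilon>) * (norm x + \<bar>t\<bar>))))"

text \<open>The dual space X* = ('a \<Rightarrow>L real) is isometrically isomorphic to L1(M):
  there is a map T assigning to each functional an integrable representative,
  linear modulo null sets, norm-preserving, and onto L1(M) (modulo null sets).\<close>
definition dual_isometric_L1 :: "'a::real_normed_vector itself \<Rightarrow> 'm measure \<Rightarrow> bool" where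
  "dual_isometric_L1 _ M \<longleftrightarrow>
     (\<exists>T::('a \<Rightarrow>\<^sub>L real) \<Rightarrow> ('m \<Rightarrow> real).
        (\<forall>f g a b. AE x in M. T (a *\<^sub>R f + b *\<^sub>R g) x = a * T f x + b * T g x) \<and>
        (\<forall>f. integrable M (T f) \<and> norm f = (\<integral>x. \<bar>T f x\<bar> \<partial>M)) \<and>
        (\<forall>g. integrable M g \<longrightarrow> (\<exists>f. AE x in M. T f x = g x)))"

definition canon :: "'a::real_normed_vector \<Rightarrow> (('a \<Rightarrow>\<^sub>L real) \<Rightarrow>\<^sub>L real)" where
  "canon x = Blinfun (\<lambda>f. blinfun_apply f x)"

end

theory Submission
  imports Defs
begin


definition hbgraphs :: "'a::real_normed_vector \<Rightarrow> ('a \<times> real) set set" where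
 "hbgraphs w = {G. (w, norm w) \<in> G \<and> (\<forall>v r r'. (v,r) \<in> G \<longrightarrow> (v,r') \<in> G \<longrightarrow> r = r') \<and>
    (\<forall>v r v' r' a b. (v,r) \<in> G \<longrightarrow> (v',r') \<in> G \<longrightarrow> (a *\<^sub>R v + b *\<^sub>R v', a*r + b*r') \<in> G) \<and>
    (\<forall>v r. (v,r) \<in> G \<longrightarrow> r \<le> norm v)}"

lemma hb_base: "{(t *\<^sub>R w, t * norm w) | t. True} \<in> hbgraphs w"
proof -
  have "r = r'" if h: "(v, r) \<in> {(t *\<^sub>R w, t * norm w) | t. True}" "(v, r') \<in> {(t *\<^sub>R w, t * norm w) | t. True}" for v r r'
  proof -
    obtain t t' where "v = t *\<^sub>R w" "r = t * norm w" "v = t' *\<^sub>R w" "r' = t' * norm w" using h by blast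
    then show ?thesis by (cases "w = 0") (auto simp: scaleR_cancel_right)
  qed
  moreover have "(a *\<^sub>R v + b *\<^sub>R v', a*r + b*r') \<in> {(t *\<^sub>R w, t * norm w) | t. True}"
    if h: "(v, r) \<in> {(t *\<^sub>R w, t * norm w) | t. True}" "(v', r') \<in> {(t *\<^sub>R w, t * norm w) | t. True}" for v r v' r' a b
  proof -
    obtain t t' where "v = t *\<^sub>R w" "r = t * norm w" "v' = t' *\<^sub>R w" "r' = t' * norm w" using h by blast
    then show ?thesis
      by (intro CollectI exI[of _ "a*t+b*t'"]) (auto simp: algebra_simps)
  qed
  moreover have "r \<le> norm v" if h: "(v, r) \<in> {(t *\<^sub>R w, t * norm w) | t. True}" for v r
  proof -
    obtain t where "v = t *\<^sub>R w" "r = t * norm w" using h by blast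
    moreover have "t * norm w \<le> \<bar>t\<bar> * norm w" by (rule mult_right_mono) auto
    ultimately show ?thesis by simp
  qed
  moreover have "(w, norm w) \<in> {(t *\<^sub>R w, t * norm w) | t. True}"
    by (intro CollectI exI[of _ 1]) auto
  ultimately show ?thesis unfolding hbgraphs_def by blast
qed

lemma hb_chain:
  assumes C: "C \<in> chains (hbgraphs w)" and ne: "C \<noteq> {}"
  shows "\<Union>C \<in> hbgraphs w"
proof -
  have sub: "C \<subseteq> hbgraphs w" and ch: "\<And>A B. A \<in> C \<Longrightarrow> B \<in> C \<Longrightarrow> A \<subseteq> B \<or> B \<subseteq> A"
    using C unfolding chains_def chain_subset_def by auto
  have two: "\<exists>G\<in>C. p \<in> G \<and> q \<in> G" if h: "p \<in> \<Union>C" "q \<in> \<Union>C" for p q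
  proof -
    obtain A B where "A \<in> C" "B \<in> C" "p \<in> A" "q \<in> B" using h by blast
    then show ?thesis using ch[of A B] by blast
  qed
  show ?thesis unfolding hbgraphs_def
  proof (intro CollectI conjI allI impI)
    obtain G where "G \<in> C" using ne by auto
    then show "(w, norm w) \<in> \<Union>C" using sub unfolding hbgraphs_def by auto
  next
    fix v r r' assume "(v, r) \<in> \<Union>C" "(v, r') \<in> \<Union>C"
    then obtain G where "G \<in> C" "(v,r) \<in> G" "(v,r') \<in> G" using two by blast
    then show "r = r'" using sub unfolding hbgraphs_def by blast
  next
    fix v r v' r' a b assume "(v, r) \<in> \<Union>C" "(v', r') \<in> \<Union>C"
    then obtain G where "G \<in> C" "(v,r) \<in> G" "(v',r') \<in> G" using two by blast
    then show "(a *\<^sub>R v + b *\<^sub>R v', a*r + b*r') \<in> \<Union>C" using sub unfolding hbgraphs_def by blast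
  next
    fix v r assume "(v, r) \<in> \<Union>C"
    then obtain G where "G \<in> C" "(v,r) \<in> G" by blast
    then show "r \<le> norm v" using sub unfolding hbgraphs_def by blast
  qed
qed

lemma hb_extend:
  assumes G: "G \<in> hbgraphs w" and z: "\<forall>r. (z, r) \<notin> G"
  shows "\<exists>G'\<in>hbgraphs w. G \<subseteq> G' \<and> G' \<noteq> G"
proof -
  have fnc: "\<And>v r r'. (v,r) \<in> G \<Longrightarrow> (v,r') \<in> G \<Longrightarrow> r = r'"
   and lin: "\<And>v r v' r' a b. (v,r) \<in> G \<Longrightarrow> (v',r') \<in> G \<Longrightarrow> (a *\<^sub>R v + b *\<^sub>R v', a*r + b*r') \<in> G"
   and dom: "\<And>v r. (v,r) \<in> G \<Longrightarrow> r \<le> norm v" and wG: "(w, norm w) \<in> G"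
    using G unfolding hbgraphs_def by auto
  have zero: "(0, 0) \<in> G" using lin[OF wG wG, of 0 0] by simp
  have scal: "(a *\<^sub>R v, a * r) \<in> G" if "(v,r) \<in> G" for a v r
    using lin[OF that zero, of a 0] by simp
  have key: "r - norm (v - z) \<le> norm (v' + z) - r'" if "(v,r) \<in> G" "(v',r') \<in> G" for v r v' r'
  proof -
    have "(v + v', r + r') \<in> G" using lin[OF that, of 1 1] by simp
    then have "r + r' \<le> norm (v + v')" by (rule dom)
    also have "\<dots> \<le> norm (v - z) + norm (v' + z)"
      using norm_triangle_ineq[of "v - z" "v' + z"] by simp
    finally show ?thesis by simp
  qed
  define L where "L = {r - norm (v - z) | v r. (v,r) \<in> G}"
  define c where "c = Sup L"
  have Lne: "L \<noteq> {}" using zero unfolding L_def by blast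
  have Lbdd: "bdd_above L" unfolding L_def bdd_above_def using key[OF _ zero] by auto
  have c1: "r - norm (v - z) \<le> c" if "(v,r) \<in> G" for v r
    unfolding c_def by (rule cSup_upper) (use that Lbdd in \<open>auto simp: L_def\<close>)
  have c2: "c \<le> norm (v' + z) - r'" if "(v',r') \<in> G" for v' r'
    unfolding c_def by (rule cSup_least[OF Lne]) (use key that in \<open>auto simp: L_def\<close>)
  define G' where "G' = {(v + t *\<^sub>R z, r + t * c) | v r t. (v,r) \<in> G}"
  have GG': "G \<subseteq> G'" unfolding G'_def by force
  have zG': "(z, c) \<in> G'" unfolding G'_def using zero by (intro CollectI exI[of _ 0] exI[of _ 0] exI[of _ 1]) auto
  have G'w: "G' \<in> hbgraphs w" unfolding hbgraphs_def
  proof (intro CollectI conjI allI impI)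
    show "(w, norm w) \<in> G'" using GG' wG by auto
  next
    fix v r r' assume a1: "(v, r) \<in> G'" and a2: "(v, r') \<in> G'"
    obtain v1 r1 t1 where e1: "v = v1 + t1 *\<^sub>R z" "r = r1 + t1 * c" "(v1,r1) \<in> G" using a1 unfolding G'_def by auto
    obtain v2 r2 t2 where e2: "v = v2 + t2 *\<^sub>R z" "r' = r2 + t2 * c" "(v2,r2) \<in> G" using a2 unfolding G'_def by auto
    have tt: "t1 = t2"
    proof (rule ccontr)
      assume ne: "t1 \<noteq> t2"
      define d where "d = t2 - t1"
      have d: "d \<noteq> 0" using ne d_def by simp
      have "v1 = v - t1 *\<^sub>R z" "v2 = v - t2 *\<^sub>R z"
        using e1(1) e2(1) add_diff_cancel by metis+
      then have "v1 - v2 = t2 *\<^sub>R z - t1 *\<^sub>R z" by simp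
      then have "v1 - v2 = d *\<^sub>R z" by (simp add: d_def scaleR_diff_left)
      then have "(1/d) *\<^sub>R (v1 - v2) = z" using d by simp
      then have eqz: "z = (1/d) *\<^sub>R v1 + (- 1/d) *\<^sub>R v2" by (simp add: algebra_simps)
      have mem: "((1/d) *\<^sub>R v1 + (- 1/d) *\<^sub>R v2, (1/d) * r1 + (- 1/d) * r2) \<in> G"
        by (rule lin[OF e1(3) e2(3)])
      have "(z, (1/d) * r1 + (- 1/d) * r2) \<in> G" using mem eqz by simp
      with z show False by blast
    qed
    then have "v1 = v2" using e1 e2 by simp
    then have "r1 = r2" using fnc e1(3) e2(3) by blast
    then show "r = r'" using e1 e2 tt by simp
  next
    fix v r v' r' a b assume a1: "(v, r) \<in> G'" and a2: "(v', r') \<in> G'"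
    obtain v1 r1 t1 where e1: "v = v1 + t1 *\<^sub>R z" "r = r1 + t1 * c" "(v1,r1) \<in> G" using a1 unfolding G'_def by auto
    obtain v2 r2 t2 where e2: "v' = v2 + t2 *\<^sub>R z" "r' = r2 + t2 * c" "(v2,r2) \<in> G" using a2 unfolding G'_def by auto
    have m: "(a *\<^sub>R v1 + b *\<^sub>R v2, a*r1 + b*r2) \<in> G" by (rule lin[OF e1(3) e2(3)])
    have q1: "a *\<^sub>R v + b *\<^sub>R v' = (a *\<^sub>R v1 + b *\<^sub>R v2) + (a*t1 + b*t2) *\<^sub>R z"
      using e1 e2 by (simp add: algebra_simps)
    have q2: "a*r + b*r' = (a*r1 + b*r2) + (a*t1 + b*t2) * c"
      using e1 e2 by (simp add: algebra_simps)
    show "(a *\<^sub>R v + b *\<^sub>R v', a*r + b*r') \<in> G'" unfolding G'_def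
      by (rule CollectI, rule exI[of _ "a *\<^sub>R v1 + b *\<^sub>R v2"], rule exI[of _ "a*r1 + b*r2"], rule exI[of _ "a*t1 + b*t2"]) (use q1 q2 m in simp)
  next
    fix v r assume "(v, r) \<in> G'"
    then obtain v1 r1 t where e: "v = v1 + t *\<^sub>R z" "r = r1 + t * c" "(v1,r1) \<in> G" unfolding G'_def by auto
    consider "t = 0" | "t > 0" | "t < 0" by linarith
    then show "r \<le> norm v"
    proof cases
      case 1 then show ?thesis using e dom by simp
    next
      case 2
      have "((1/t) *\<^sub>R v1, (1/t) * r1) \<in> G" by (rule scal[OF e(3)])
      from c2[OF this] have "c \<le> norm ((1/t) *\<^sub>R v1 + z) - (1/t) * r1" .
      then have "t * c \<le> t * (norm ((1/t) *\<^sub>R v1 + z) - (1/t) * r1)" using 2 by (simp add: mult_left_mono)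
      also have "\<dots> = norm (v1 + t *\<^sub>R z) - r1"
      proof -
        have "t * norm ((1/t) *\<^sub>R v1 + z) = norm (t *\<^sub>R ((1/t) *\<^sub>R v1 + z))" using 2 by simp
        also have "t *\<^sub>R ((1/t) *\<^sub>R v1 + z) = v1 + t *\<^sub>R z" using 2 by (simp add: algebra_simps)
        finally show ?thesis using 2 by (simp add: algebra_simps)
      qed
      finally show ?thesis using e by simp
    next
      case 3
      define s where "s = - t"
      have s: "s > 0" using 3 s_def by simp
      have "((1/s) *\<^sub>R v1, (1/s) * r1) \<in> G" by (rule scal[OF e(3)])
      from c1[OF this] have "(1/s) * r1 - norm ((1/s) *\<^sub>R v1 - z) \<le> c" .
      then have "s * ((1/s) * r1 - norm ((1/s) *\<^sub>R v1 - z)) \<le> s * c" using s by (simp add: mult_left_mono)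
      moreover have "s * ((1/s) * r1 - norm ((1/s) *\<^sub>R v1 - z)) = r1 - norm (v1 - s *\<^sub>R z)"
      proof -
        have "s * norm ((1/s) *\<^sub>R v1 - z) = norm (s *\<^sub>R ((1/s) *\<^sub>R v1 - z))" using s by simp
        also have "s *\<^sub>R ((1/s) *\<^sub>R v1 - z) = v1 - s *\<^sub>R z" using s by (simp add: algebra_simps)
        finally show ?thesis using s by (simp add: algebra_simps)
      qed
      ultimately show ?thesis using e s_def by (simp add: algebra_simps)
    qed
  qed
  have "G' \<noteq> G" using zG' z by blast
  then show ?thesis using G'w GG' by blast
qed

lemma hahn_banach_linear:
  fixes w :: "'a::real_normed_vector"
  shows "\<exists>f. linear f \<and> (\<forall>v. f v \<le> norm v) \<and> f w = norm w"
proof -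
  have "\<exists>M\<in>hbgraphs w. \<forall>X\<in>hbgraphs w. M \<subseteq> X \<longrightarrow> X = M"
  proof (rule Zorn_Lemma2, intro ballI)
    fix C assume C: "C \<in> chains (hbgraphs w)"
    show "\<exists>U\<in>hbgraphs w. \<forall>X\<in>C. X \<subseteq> U"
    proof (cases "C = {}")
      case True then show ?thesis by (intro bexI[OF _ hb_base]) simp
    next
      case False then show ?thesis by (intro bexI[OF _ hb_chain[OF C False]]) blast
    qed
  qed
  then obtain G where G: "G \<in> hbgraphs w" and max: "\<And>X. X \<in> hbgraphs w \<Longrightarrow> G \<subseteq> X \<Longrightarrow> X = G" by blast
  have tot: "\<exists>r. (z, r) \<in> G" for z
  proof (rule ccontr)
    assume "\<nexists>r. (z, r) \<in> G"
    then obtain G' where "G' \<in> hbgraphs w" "G \<subseteq> G'" "G' \<noteq> G" using hb_extend[OF G] by blast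
    then show False using max by blast
  qed
  have Gfn: "\<And>v r r'. (v,r) \<in> G \<Longrightarrow> (v,r') \<in> G \<Longrightarrow> r = r'"
   and Glin: "\<And>v r v' r' a b. (v,r) \<in> G \<Longrightarrow> (v',r') \<in> G \<Longrightarrow> (a *\<^sub>R v + b *\<^sub>R v', a*r + b*r') \<in> G"
   and Gdom: "\<And>v r. (v,r) \<in> G \<Longrightarrow> r \<le> norm v" and Gw: "(w, norm w) \<in> G"
    using G unfolding hbgraphs_def by auto
  define f where "f v = (THE r. (v, r) \<in> G)" for v
  have fG: "(v, f v) \<in> G" for v
  proof -
    obtain r where r: "(v, r) \<in> G" using tot by blast
    have "(THE r. (v, r) \<in> G) = r" by (rule the_equality) (use r Gfn in blast)+
    then show ?thesis using r f_def by simp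
  qed
  have feq: "(v, r) \<in> G \<Longrightarrow> f v = r" for v r using fG Gfn by blast
  have lf: "f (a *\<^sub>R v + b *\<^sub>R v') = a * f v + b * f v'" for a b v v'
    by (rule feq, rule Glin[OF fG fG])
  have "linear f"
  proof (rule linearI)
    fix x y show "f (x + y) = f x + f y" using lf[of 1 x 1 y] by simp
  next
    fix a x show "f (a *\<^sub>R x) = a *\<^sub>R f x" using lf[of a x 0 x] by simp
  qed
  moreover have "\<forall>v. f v \<le> norm v" using Gdom fG by blast
  moreover have "f w = norm w" using Gw by (rule feq)
  ultimately show ?thesis by blast
qed

lemma hahn_banach_norm:
  fixes w :: "'a::real_normed_vector"
  shows "\<exists>F::'a \<Rightarrow>\<^sub>L real. norm F \<le> 1 \<and> blinfun_apply F w = norm w"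
proof -
  obtain f where lf: "linear f" and le: "\<forall>v. f v \<le> norm v" and fw: "f w = norm w"
    using hahn_banach_linear by blast
  have abs: "\<bar>f v\<bar> \<le> norm v" for v
  proof -
    have "f (- v) = - f v" using lf by (rule linear_neg)
    moreover have "f v \<le> norm v" "f (-v) \<le> norm (-v)" using le by blast+
    ultimately show ?thesis by simp
  qed
  have bl: "bounded_linear f"
  proof (rule bounded_linear_intro[where K=1])
    show "f (x + y) = f x + f y" for x y using lf by (rule linear_add)
    show "f (r *\<^sub>R x) = r *\<^sub>R f x" for r x using lf by (rule linear_scale)
    show "norm (f x) \<le> norm x * 1" for x using abs[of x] by simp
  qed
  have ap: "blinfun_apply (Blinfun f) = f" by (rule bounded_linear_Blinfun_apply[OF bl])
  have "norm (Blinfun f) \<le> 1"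
  proof (rule norm_blinfun_bound)
    show "(0::real) \<le> 1" by simp
    fix x show "norm (blinfun_apply (Blinfun f) x) \<le> 1 * norm x" using abs[of x] ap by simp
  qed
  moreover have "blinfun_apply (Blinfun f) w = norm w" using ap fw by simp
  ultimately show ?thesis by blast
qed


locale l1d =
  fixes T :: "('a::banach \<Rightarrow>\<^sub>L real) \<Rightarrow> 'm \<Rightarrow> real" and M :: "'m measure"
  assumes Tlin: "\<And>f g a b. AE x in M. T (a *\<^sub>R f + b *\<^sub>R g) x = a * T f x + b * T g x"
    and Tint: "\<And>f. integrable M (T f)"
    and Tnorm: "\<And>f. norm f = (\<integral>x. \<bar>T f x\<bar> \<partial>M)"
    and Tsurj: "\<And>g. integrable M g \<Longrightarrow> \<exists>f. AE x in M. T f x = g x"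
begin

definition S :: "('m \<Rightarrow> real) \<Rightarrow> ('a \<Rightarrow>\<^sub>L real)" where
  "S g = (SOME f. AE x in M. T f x = g x)"

lemma Tmeas[measurable]: "T f \<in> borel_measurable M"
  using Tint by (rule borel_measurable_integrable)

lemma S_T: "integrable M g \<Longrightarrow> AE x in M. T (S g) x = g x"
  unfolding S_def using Tsurj by (rule someI_ex)

lemma T_zero: assumes "AE x in M. T f x = 0" shows "f = 0"
proof -
  have "(\<integral>x. \<bar>T f x\<bar> \<partial>M) = (\<integral>x. 0 \<partial>M)"
    by (rule integral_cong_AE) (use assms in auto)
  then have "norm f = 0" using Tnorm by simp
  then show ?thesis by simp
qed

lemma T_diff: "AE x in M. T (f - g) x = T f x - T g x"
  using Tlin[of 1 f "-1" g] by simp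

lemma T_eqI: assumes "AE x in M. T f x = T g x" shows "f = g"
proof -
  have "AE x in M. T (f - g) x = 0" using T_diff[of f g] assms by eventually_elim simp
  then show ?thesis using T_zero by fastforce
qed

lemma S_unique: assumes "integrable M g" "AE x in M. T f x = g x" shows "S g = f"
proof (rule T_eqI)
  show "AE x in M. T (S g) x = T f x" using S_T[OF assms(1)] assms(2) by eventually_elim simp
qed

lemma S_T': "S (T f) = f"
  by (rule S_unique) (auto simp: Tint)

lemma S_cong: assumes "AE x in M. g x = h x" shows "S g = S h"
proof -
  have "(\<lambda>f. AE x in M. T f x = g x) = (\<lambda>f. AE x in M. T f x = h x)"
  proof (rule ext)
    fix f show "(AE x in M. T f x = g x) = (AE x in M. T f x = h x)"
      using assms by (auto elim: AE_mp)
  qed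
  then show ?thesis unfolding S_def by simp
qed

lemma S_lin: assumes "integrable M g" "integrable M h"
  shows "S (\<lambda>x. a * g x + b * h x) = a *\<^sub>R S g + b *\<^sub>R S h"
proof (rule S_unique)
  show "integrable M (\<lambda>x. a * g x + b * h x)" using assms by auto
  show "AE x in M. T (a *\<^sub>R S g + b *\<^sub>R S h) x = a * g x + b * h x"
    using Tlin[of a "S g" b "S h"] S_T[OF assms(1)] S_T[OF assms(2)] by eventually_elim simp
qed

lemma S_add: "integrable M g \<Longrightarrow> integrable M h \<Longrightarrow> S (\<lambda>x. g x + h x) = S g + S h"
  using S_lin[of g h 1 1] by simp

lemma S_scale: "integrable M g \<Longrightarrow> S (\<lambda>x. a * g x) = a *\<^sub>R S g"
  using S_lin[of g g a 0] by simp

lemma S_diff: "integrable M g \<Longrightarrow> integrable M h \<Longrightarrow> S (\<lambda>x. g x - h x) = S g - S h"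
  using S_lin[of g h 1 "-1"] by simp

lemma S_zero: "S (\<lambda>x. 0) = 0"
  using S_scale[of "\<lambda>x. 0" 0] by simp

lemma S_sum: assumes "finite I" "\<And>i. i \<in> I \<Longrightarrow> integrable M (g i)"
  shows "S (\<lambda>x. \<Sum>i\<in>I. g i x) = (\<Sum>i\<in>I. S (g i))"
  using assms
proof (induction I rule: finite_induct)
  case empty then show ?case using S_zero by simp
next
  case (insert i I)
  have "S (\<lambda>x. \<Sum>j\<in>insert i I. g j x) = S (\<lambda>x. g i x + (\<Sum>j\<in>I. g j x))"
    using insert by simp
  also have "\<dots> = S (g i) + S (\<lambda>x. \<Sum>j\<in>I. g j x)"
    using insert by (intro S_add) auto
  finally show ?case using insert by simp
qed

lemma norm_S: assumes "integrable M g" shows "norm (S g) = (\<integral>x. \<bar>g x\<bar> \<partial>M)"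
proof -
  have "norm (S g) = (\<integral>x. \<bar>T (S g) x\<bar> \<partial>M)" by (rule Tnorm)
  also have "\<dots> = (\<integral>x. \<bar>g x\<bar> \<partial>M)"
    using S_T[OF assms] assms by (intro integral_cong_AE) (auto elim: AE_mp)
  finally show ?thesis .
qed

lemma S_bound: assumes "integrable M g" shows "\<bar>blinfun_apply (S g) v\<bar> \<le> norm v * (\<integral>x. \<bar>g x\<bar> \<partial>M)"
  using norm_blinfun[of "S g" v] norm_S[OF assms] by (simp add: mult.commute)

definition U :: "('m \<Rightarrow> real) \<Rightarrow> (('a \<Rightarrow>\<^sub>L real) \<Rightarrow>\<^sub>L real)" where
  "U g = Blinfun (\<lambda>f. \<integral>x. g x * T f x \<partial>M)"

lemma U_int: assumes "g \<in> borel_measurable M" "\<And>x. \<bar>g x\<bar> \<le> B"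
  shows "integrable M (\<lambda>x. g x * T f x)"
proof (rule Bochner_Integration.integrable_bound[of _ "\<lambda>x. B * T f x"])
  show "integrable M (\<lambda>x. B * T f x)" using Tint by auto
  show "(\<lambda>x. g x * T f x) \<in> borel_measurable M" using assms(1) by measurable
  have "B \<ge> 0" using assms(2)[of undefined] by linarith
  then show "AE x in M. norm (g x * T f x) \<le> norm (B * T f x)"
    using assms(2) by (auto simp: abs_mult intro!: mult_right_mono)
qed

lemma U_bl: assumes g: "g \<in> borel_measurable M" and gB: "\<And>x. \<bar>g x\<bar> \<le> B"
  shows "bounded_linear (\<lambda>f. \<integral>x. g x * T f x \<partial>M)"
proof (rule bounded_linear_intro[where K=B])
  note I = U_int[OF g gB]
  fix f f' :: "'a \<Rightarrow>\<^sub>L real" and r :: real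
  have "(\<integral>x. g x * T (f + f') x \<partial>M) = (\<integral>x. g x * T f x + g x * T f' x \<partial>M)"
    using Tlin[of 1 f 1 f'] g by (intro integral_cong_AE) (auto elim!: AE_mp simp: algebra_simps)
  then show "(\<integral>x. g x * T (f + f') x \<partial>M) = (\<integral>x. g x * T f x \<partial>M) + (\<integral>x. g x * T f' x \<partial>M)"
    using I by simp
  have "(\<integral>x. g x * T (r *\<^sub>R f) x \<partial>M) = (\<integral>x. r * (g x * T f x) \<partial>M)"
    using Tlin[of r f 0 f] g by (intro integral_cong_AE) (auto elim!: AE_mp simp: algebra_simps)
  then show "(\<integral>x. g x * T (r *\<^sub>R f) x \<partial>M) = r *\<^sub>R (\<integral>x. g x * T f x \<partial>M)"
    by simp
  have "B \<ge> 0" using gB[of undefined] by linarith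
  have "\<bar>\<integral>x. g x * T f x \<partial>M\<bar> \<le> (\<integral>x. \<bar>g x * T f x\<bar> \<partial>M)"
    by (rule integral_abs_bound)
  also have "\<dots> \<le> (\<integral>x. B * \<bar>T f x\<bar> \<partial>M)"
    using integrable_abs[OF I[of f]] Tint gB \<open>B \<ge> 0\<close> by (intro integral_mono) (auto simp: abs_mult intro!: mult_right_mono)
  also have "\<dots> = B * norm f" using Tnorm by simp
  finally show "norm (\<integral>x. g x * T f x \<partial>M) \<le> norm f * B" by (simp add: mult.commute)
qed

lemma U_apply: "g \<in> borel_measurable M \<Longrightarrow> (\<And>x. \<bar>g x\<bar> \<le> B) \<Longrightarrow>
   blinfun_apply (U g) f = (\<integral>x. g x * T f x \<partial>M)"
  unfolding U_def by (subst bounded_linear_Blinfun_apply[OF U_bl]) auto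

lemma norm_U: assumes g: "g \<in> borel_measurable M" and gB: "\<And>x. \<bar>g x\<bar> \<le> B"
  shows "norm (U g) \<le> B"
proof (rule norm_blinfun_bound)
  show "B \<ge> 0" using gB[of undefined] by linarith
  fix f
  have "\<bar>\<integral>x. g x * T f x \<partial>M\<bar> \<le> (\<integral>x. \<bar>g x * T f x\<bar> \<partial>M)"
    by (rule integral_abs_bound)
  also have "\<dots> \<le> (\<integral>x. B * \<bar>T f x\<bar> \<partial>M)"
    using integrable_abs[OF U_int[OF g gB, of f]] Tint gB by (intro integral_mono) (auto simp: abs_mult intro!: mult_right_mono)
  also have "\<dots> = B * norm f" using Tnorm by simp
  finally show "norm (blinfun_apply (U g) f) \<le> B * norm f" using U_apply[OF g gB] by simp
qed

lemma U_S: assumes g: "g \<in> borel_measurable M" and gB: "\<And>x. \<bar>g x\<bar> \<le> B" and p: "integrable M p"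
  shows "blinfun_apply (U g) (S p) = (\<integral>x. g x * p x \<partial>M)"
  unfolding U_apply[OF g gB] using S_T[OF p] g p
  by (intro integral_cong_AE) (auto elim!: AE_mp)

lemma U_sum: assumes "finite I" and g: "\<And>i. g i \<in> borel_measurable M" and gB: "\<And>i x. \<bar>g i x\<bar> \<le> B"
  shows "(\<Sum>i\<in>I. c i *\<^sub>R U (g i)) = U (\<lambda>x. \<Sum>i\<in>I. c i * g i x)"
proof (rule blinfun_eqI)
  fix f
  have B: "\<bar>\<Sum>i\<in>I. c i * g i x\<bar> \<le> (\<Sum>i\<in>I. \<bar>c i\<bar> * B)" for x
    by (rule order.trans[OF sum_abs]) (use gB in \<open>auto simp: abs_mult intro!: sum_mono mult_left_mono\<close>)
  have "blinfun_apply (\<Sum>i\<in>I. c i *\<^sub>R U (g i)) f = (\<Sum>i\<in>I. c i * (\<integral>x. g i x * T f x \<partial>M))"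
    using U_apply[OF g gB] by (simp add: blinfun.sum_left blinfun.scaleR_left)
  also have "\<dots> = (\<integral>x. (\<Sum>i\<in>I. c i * g i x) * T f x \<partial>M)"
    using U_int[OF g gB] by (simp add: sum_distrib_right mult.assoc)
  also have "\<dots> = blinfun_apply (U (\<lambda>x. \<Sum>i\<in>I. c i * g i x)) f"
    by (rule U_apply[symmetric, OF _ B]) (use g in measurable)
  finally show "blinfun_apply (\<Sum>i\<in>I. c i *\<^sub>R U (g i)) f = blinfun_apply (U (\<lambda>x. \<Sum>i\<in>I. c i * g i x)) f" .
qed

end


definition octv :: "'a::real_normed_vector set \<Rightarrow> real \<Rightarrow> 'a" where
 "octv F e = (SOME y. norm y = 1 \<and> (\<forall>x\<in>span F. \<forall>t::real. norm (x + t *\<^sub>R y) \<ge> (1 - e) * (norm x + \<bar>t\<bar>)))"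

lemma octv: assumes "octahedral TYPE('a::real_normed_vector)" "finite (F::'a set)" "e > 0"
  shows "norm (octv F e) = 1 \<and> (\<forall>x\<in>span F. \<forall>t::real. norm (x + t *\<^sub>R octv F e) \<ge> (1 - e) * (norm x + \<bar>t\<bar>))"
proof -
  have "\<exists>y. norm y = 1 \<and> (\<forall>x\<in>span F. \<forall>t::real. norm (x + t *\<^sub>R y) \<ge> (1 - e) * (norm x + \<bar>t\<bar>))"
    using assms unfolding octahedral_def by blast
  then show ?thesis unfolding octv_def by (rule someI_ex)
qed

primrec yl :: "'a::real_normed_vector set \<Rightarrow> (nat \<Rightarrow> real) \<Rightarrow> nat \<Rightarrow> 'a list" where
  "yl A e 0 = []"
| "yl A e (Suc n) = yl A e n @ [octv (A \<union> set (yl A e n)) (e n)]"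

definition ys :: "'a::real_normed_vector set \<Rightarrow> (nat \<Rightarrow> real) \<Rightarrow> nat \<Rightarrow> 'a" where
  "ys A e n = last (yl A e (Suc n))"

lemma ys_eq: "ys A e n = octv (A \<union> set (yl A e n)) (e n)"
  unfolding ys_def by simp

lemma yl_eq: "yl A e n = map (ys A e) [0..<n]"
  by (induction n) (auto simp: ys_eq)

lemma ys_prop:
  assumes "octahedral TYPE('a::real_normed_vector)" "finite (A::'a set)" "e n > 0"
  shows "norm (ys A e n) = 1 \<and> (\<forall>z\<in>span (A \<union> ys A e ` {..<n}). \<forall>t::real.
            norm (z + t *\<^sub>R ys A e n) \<ge> (1 - e n) * (norm z + \<bar>t\<bar>))"
proof -
  have "set (yl A e n) = ys A e ` {..<n}" by (auto simp: yl_eq)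
  then show ?thesis unfolding ys_eq using octv[OF assms(1) _ assms(3), of "A \<union> set (yl A e n)"] assms(2)
    by simp
qed

lemma chain_est:
  fixes F :: "'a::real_normed_vector \<Rightarrow>\<^sub>L real" and z y :: "nat \<Rightarrow> 'a"
  assumes nF: "norm F \<le> 1" and top: "blinfun_apply F (z N) \<ge> norm (z N)"
   and step: "\<And>l. l < N \<Longrightarrow> z (Suc l) = z l + t l *\<^sub>R y l"
   and ny: "\<And>l. l < N \<Longrightarrow> norm (y l) = 1"
   and oc: "\<And>l. l < N \<Longrightarrow> norm (z (Suc l)) \<ge> (1 - \<eta> l) * (norm (z l) + \<bar>t l\<bar>)"
  shows "l \<le> N \<Longrightarrow> blinfun_apply F (z l) \<ge> norm (z l) - (\<Sum>i\<in>{l..<N}. \<eta> i * (norm (z i) + \<bar>t i\<bar>))"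
    and "l < N \<Longrightarrow> t l * blinfun_apply F (y l) \<ge> \<bar>t l\<bar> - (\<Sum>i\<in>{l..<N}. \<eta> i * (norm (z i) + \<bar>t i\<bar>))"
proof -
  define E where "E l = (\<Sum>i\<in>{l..<N}. \<eta> i * (norm (z i) + \<bar>t i\<bar>))" for l
  have fb: "\<bar>blinfun_apply F v\<bar> \<le> norm v" for v
  proof -
    have "norm F * norm v \<le> 1 * norm v" using nF by (intro mult_right_mono) auto
    then show ?thesis using norm_blinfun[of F v] by simp
  qed
  have Es: "E l = \<eta> l * (norm (z l) + \<bar>t l\<bar>) + E (Suc l)" if "l < N" for l
    unfolding E_def using that by (simp add: sum.atLeast_Suc_lessThan)
  have fs: "blinfun_apply F (z (Suc l)) = blinfun_apply F (z l) + t l * blinfun_apply F (y l)" if "l < N" for l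
    using step[OF that] by (simp add: blinfun.add_right blinfun.scaleR_right)
  have ty: "t l * blinfun_apply F (y l) \<le> \<bar>t l\<bar>" if "l < N" for l
  proof -
    have "t l * blinfun_apply F (y l) \<le> \<bar>t l\<bar> * \<bar>blinfun_apply F (y l)\<bar>" by (simp add: abs_mult[symmetric])
    also have "\<dots> \<le> \<bar>t l\<bar> * 1" using fb[of "y l"] ny[OF that] by (intro mult_left_mono) auto
    finally show ?thesis by simp
  qed
  have P: "blinfun_apply F (z l) \<ge> norm (z l) - E l" if "l \<le> N" for l
    using that
  proof (induction l rule: inc_induct)
    case base then show ?case using top by (simp add: E_def)
  next
    case (step l)
    have "blinfun_apply F (z l) = blinfun_apply F (z (Suc l)) - t l * blinfun_apply F (y l)"
      using fs[OF step(2)] by simp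
    also have "\<dots> \<ge> norm (z (Suc l)) - E (Suc l) - \<bar>t l\<bar>" using step(3) ty[OF step(2)] by linarith
    finally have "blinfun_apply F (z l) \<ge> norm (z (Suc l)) - E (Suc l) - \<bar>t l\<bar>" .
    moreover have "norm (z (Suc l)) \<ge> (norm (z l) + \<bar>t l\<bar>) - \<eta> l * (norm (z l) + \<bar>t l\<bar>)"
      using oc[OF step(2)] by (simp add: algebra_simps)
    ultimately show ?case using Es[OF step(2)] by linarith
  qed
  show "l \<le> N \<Longrightarrow> blinfun_apply F (z l) \<ge> norm (z l) - (\<Sum>i\<in>{l..<N}. \<eta> i * (norm (z i) + \<bar>t i\<bar>))"
    using P unfolding E_def by blast
  assume l: "l < N"
  have "t l * blinfun_apply F (y l) = blinfun_apply F (z (Suc l)) - blinfun_apply F (z l)"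
    using fs[OF l] by simp
  moreover have "blinfun_apply F (z (Suc l)) \<ge> norm (z (Suc l)) - E (Suc l)" using P l by simp
  moreover have "blinfun_apply F (z l) \<le> norm (z l)" using fb[of "z l"] by simp
  moreover have "norm (z (Suc l)) \<ge> (norm (z l) + \<bar>t l\<bar>) - \<eta> l * (norm (z l) + \<bar>t l\<bar>)"
    using oc[OF l] by (simp add: algebra_simps)
  ultimately show "t l * blinfun_apply F (y l) \<ge> \<bar>t l\<bar> - (\<Sum>i\<in>{l..<N}. \<eta> i * (norm (z i) + \<bar>t i\<bar>))"
    using Es[OF l] unfolding E_def by linarith
qed

lemma geom_sum: "l \<le> N \<Longrightarrow> (\<Sum>i\<in>{l..<N}. (1/2::real)^(Suc i)) = (1/2)^l - (1/2)^N"
proof (induction N)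
  case 0 then show ?case by simp
next
  case (Suc N)
  show ?case
  proof (cases "l = Suc N")
    case True then show ?thesis by simp
  next
    case False
    then have "l \<le> N" using Suc by simp
    then show ?thesis using Suc by (simp add: sum.atLeastLessThan_Suc)
  qed
qed


definition etaf :: "real \<Rightarrow> nat \<Rightarrow> real" where
  "etaf \<beta> i = \<beta> * (1/2) ^ Suc i / (real i + 2)"

definition sgnp :: "nat \<Rightarrow> nat \<Rightarrow> real" where
  "sgnp n j = (if j = n then 1 else -1)"

lemma etaf_pos: "\<beta> > 0 \<Longrightarrow> etaf \<beta> i > 0"
  unfolding etaf_def by simp

lemma pattern_est:
  fixes A :: "'a::real_normed_vector set"
  assumes oct: "octahedral TYPE('a)" and fin: "finite A" and sph: "A \<subseteq> sphere 0 1"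
    and b: "\<beta> > 0" and x: "x \<in> A"
    and nF: "norm F \<le> 1"
    and Fw: "blinfun_apply F (x + (\<Sum>j<Suc n. sgnp n j *\<^sub>R ys A (etaf \<beta>) j)) = norm (x + (\<Sum>j<Suc n. sgnp n j *\<^sub>R ys A (etaf \<beta>) j))"
  shows "blinfun_apply F x \<ge> 1 - \<beta>"
    and "\<And>j. j < n \<Longrightarrow> - blinfun_apply F (ys A (etaf \<beta>) j) \<ge> 1 - \<beta> * (1/2)^j"
    and "blinfun_apply F (ys A (etaf \<beta>) n) \<ge> 1 - \<beta> * (1/2)^n"
proof -
  define y where "y = ys A (etaf \<beta>)"
  define \<eta> where "\<eta> = etaf \<beta>"
  define z where "z l = x + (\<Sum>j<l. sgnp n j *\<^sub>R y j)" for l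
  define t where "t = sgnp n"
  have yp: "norm (y l) = 1 \<and> (\<forall>v\<in>span (A \<union> y ` {..<l}). \<forall>s::real.
            norm (v + s *\<^sub>R y l) \<ge> (1 - \<eta> l) * (norm v + \<bar>s\<bar>))" for l
    unfolding y_def \<eta>_def by (rule ys_prop[OF oct fin etaf_pos[OF b]])
  have nx: "norm x = 1" using x sph by auto
  have tabs: "\<bar>t j\<bar> = 1" for j unfolding t_def sgnp_def by simp
  have zspan: "z l \<in> span (A \<union> y ` {..<l})" for l
    unfolding z_def
    by (intro span_add span_sum span_scale span_base) (use x in auto)
  have step: "z (Suc l) = z l + t l *\<^sub>R y l" for l unfolding z_def t_def by simp
  have oc: "norm (z (Suc l)) \<ge> (1 - \<eta> l) * (norm (z l) + \<bar>t l\<bar>)" for l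
    using yp[of l] zspan[of l] step[of l] by auto
  have nz: "norm (z l) \<le> 1 + real l" for l
  proof (induction l)
    case 0 then show ?case using nx by (simp add: z_def)
  next
    case (Suc l)
    have "norm (z (Suc l)) \<le> norm (z l) + norm (t l *\<^sub>R y l)" using step norm_triangle_ineq by metis
    also have "norm (t l *\<^sub>R y l) = 1" using yp[of l] tabs[of l] by simp
    finally show ?case using Suc by simp
  qed
  define N where "N = Suc n"
  have top: "blinfun_apply F (z N) \<ge> norm (z N)" using Fw unfolding z_def N_def y_def by simp
  note ce = chain_est[where F=F and z=z and N=N and t=t and y=y and \<eta>=\<eta>, OF nF top step _ oc]
  have ce1: "l \<le> N \<Longrightarrow> blinfun_apply F (z l) \<ge> norm (z l) - (\<Sum>i\<in>{l..<N}. \<eta> i * (norm (z i) + \<bar>t i\<bar>))" for l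
    using ce(1) yp by blast
  have ce2: "l < N \<Longrightarrow> t l * blinfun_apply F (y l) \<ge> \<bar>t l\<bar> - (\<Sum>i\<in>{l..<N}. \<eta> i * (norm (z i) + \<bar>t i\<bar>))" for l
    using ce(2) yp by blast
  have Eb: "(\<Sum>i\<in>{l..<N}. \<eta> i * (norm (z i) + \<bar>t i\<bar>)) \<le> \<beta> * (1/2)^l" if "l \<le> N" for l
  proof -
    have "(\<Sum>i\<in>{l..<N}. \<eta> i * (norm (z i) + \<bar>t i\<bar>)) \<le> (\<Sum>i\<in>{l..<N}. \<beta> * (1/2)^(Suc i))"
    proof (rule sum_mono)
      fix i
      have "\<eta> i * (norm (z i) + \<bar>t i\<bar>) \<le> \<eta> i * (real i + 2)"
        using nz[of i] tabs[of i] etaf_pos[OF b, of i] unfolding \<eta>_def by (intro mult_left_mono) auto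
      also have "\<dots> = \<beta> * (1/2)^(Suc i)"
      proof -
        have "real i + 2 \<noteq> 0" by simp
        then show ?thesis unfolding \<eta>_def etaf_def
          by (simp only: times_divide_eq_left) (rule nonzero_mult_div_cancel_right)
      qed
      finally show "\<eta> i * (norm (z i) + \<bar>t i\<bar>) \<le> \<beta> * (1/2)^(Suc i)" .
    qed
    also have "\<dots> = \<beta> * ((1/2)^l - (1/2)^N)" by (simp only: sum_distrib_left[symmetric] geom_sum[OF that])
    also have "\<dots> \<le> \<beta> * (1/2)^l" using b by (simp add: mult_left_mono)
    finally show ?thesis .
  qed
  show "blinfun_apply F x \<ge> 1 - \<beta>"
    using ce1[of 0] Eb[of 0] nx by (simp add: z_def)
  show "- blinfun_apply F (ys A (etaf \<beta>) j) \<ge> 1 - \<beta> * (1/2)^j" if "j < n" for j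
    using ce2[of j] Eb[of j] that unfolding N_def t_def sgnp_def y_def by simp
  show "blinfun_apply F (ys A (etaf \<beta>) n) \<ge> 1 - \<beta> * (1/2)^n"
    using ce2[of n] Eb[of n] unfolding N_def t_def sgnp_def y_def by simp
qed


context l1d begin

definition nu :: "('m \<Rightarrow> real) \<Rightarrow> 'a \<Rightarrow> 'm set \<Rightarrow> real" where
 "nu G y E = blinfun_apply (S (\<lambda>x. indicator E x * G x)) y"

lemma hahn_set:
  assumes GI: "integrable M G" and G0: "\<And>x. G x \<ge> 0" and ny: "norm y \<le> 1"
  shows "\<exists>P\<in>sets M. (\<forall>E\<in>sets M. E \<subseteq> P \<longrightarrow> nu G y E \<ge> 0) \<and> (\<forall>E\<in>sets M. E \<inter> P = {} \<longrightarrow> nu G y E \<le> 0)"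
proof -
  have Gm[measurable]: "G \<in> borel_measurable M" using GI by (rule borel_measurable_integrable)
  have GEI: "E \<in> sets M \<Longrightarrow> integrable M (\<lambda>x. indicator E x * G x)" for E
    using integrable_mult_indicator[of E M G] GI by simp
  define a where "a E = (\<integral>x. indicator E x * G x \<partial>M) + nu G y E" for E
  have nub: "\<bar>nu G y E\<bar> \<le> (\<integral>x. indicator E x * G x \<partial>M)" if E: "E \<in> sets M" for E
  proof -
    have "\<bar>nu G y E\<bar> \<le> norm y * (\<integral>x. \<bar>indicator E x * G x\<bar> \<partial>M)"
      unfolding nu_def by (rule S_bound[OF GEI[OF E]])
    also have "(\<integral>x. \<bar>indicator E x * G x\<bar> \<partial>M) = (\<integral>x. indicator E x * G x \<partial>M)"
      using G0 by (intro Bochner_Integration.integral_cong) (auto simp: abs_mult)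
    also have "norm y * (\<integral>x. indicator E x * G x \<partial>M) \<le> 1 * (\<integral>x. indicator E x * G x \<partial>M)"
      using ny G0 by (intro mult_right_mono Bochner_Integration.integral_nonneg) auto
    finally show ?thesis by simp
  qed
  have intnn: "(\<integral>x. indicator E x * G x \<partial>M) \<ge> 0" for E
    using G0 by (intro Bochner_Integration.integral_nonneg) auto
  have a_nn: "E \<in> sets M \<Longrightarrow> a E \<ge> 0" for E
    using nub[of E] unfolding a_def by linarith
  have add: "a (A \<union> B) = a A + a B" if AB: "A \<in> sets M" "B \<in> sets M" "A \<inter> B = {}" for A B
  proof -
    have ind: "indicator (A \<union> B) x * G x = indicator A x * G x + indicator B x * G x" for x
      using AB(3) by (simp add: indicator_disj_union distrib_right)
    have "(\<integral>x. indicator (A \<union> B) x * G x \<partial>M) = (\<integral>x. indicator A x * G x \<partial>M) + (\<integral>x. indicator B x * G x \<partial>M)"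
      unfolding ind using GEI AB by (intro Bochner_Integration.integral_add) auto
    moreover have "nu G y (A \<union> B) = nu G y A + nu G y B"
      unfolding nu_def ind using S_add[OF GEI[OF AB(1)] GEI[OF AB(2)]] by (simp add: blinfun.add_left)
    ultimately show ?thesis unfolding a_def by simp
  qed
  have fin: "(\<Sum>i<n. a (A i)) = a (\<Union>i<n. A i)" if A: "range A \<subseteq> sets M" "disjoint_family A" for A :: "nat \<Rightarrow> 'm set" and n :: nat
  proof (induction n)
    case 0
    have "a {} = 0" unfolding a_def nu_def by (simp add: S_zero)
    then show ?case by simp
  next
    case (Suc n)
    have "(\<Union>i<Suc n. A i) = (\<Union>i<n. A i) \<union> A n" by (auto simp: lessThan_Suc)
    moreover have "(\<Union>i<n. A i) \<inter> A n = {}" using A(2) unfolding disjoint_family_on_def by (auto dest!: less_imp_neq)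
    moreover have "(\<Union>i<n. A i) \<in> sets M" using A(1) by auto
    moreover have "A n \<in> sets M" using A(1) by auto
    ultimately show ?case using Suc add by simp
  qed
  have lim: "(\<lambda>n. a (\<Union>i<n. A i)) \<longlonglongrightarrow> a (\<Union>i. A i)" if A: "range A \<subseteq> sets M" "disjoint_family A" for A :: "nat \<Rightarrow> 'm set"
  proof -
    define U where "U = (\<Union>i. A i)"
    define B where "B n = (\<Union>i<n. A i)" for n
    have Us: "U \<in> sets M" using A unfolding U_def by auto
    have Bs: "B n \<in> sets M" for n using A unfolding B_def by auto
    have BU: "B n \<subseteq> U" for n unfolding B_def U_def by auto
    have split: "a U = a (B n) + a (U - B n)" for n
    proof -
      have "U = B n \<union> (U - B n)" using BU by auto
      then have "a U = a (B n \<union> (U - B n))" by simp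
      also have "\<dots> = a (B n) + a (U - B n)" using Bs Us by (intro add) auto
      finally show ?thesis .
    qed
    have dc: "(\<lambda>n. \<integral>x. indicator (U - B n) x * G x \<partial>M) \<longlonglongrightarrow> (\<integral>x. 0 \<partial>M)"
    proof (rule integral_dominated_convergence[where w=G])
      show "(\<lambda>x. 0::real) \<in> borel_measurable M" by simp
      show "(\<lambda>x. indicator (U - B n) x * G x) \<in> borel_measurable M" for n using Us Bs by measurable
      show "integrable M G" by fact
      show "AE x in M. (\<lambda>n. indicator (U - B n) x * G x) \<longlonglongrightarrow> 0"
      proof (rule AE_I2)
        fix x
        show "(\<lambda>n. indicator (U - B n) x * G x) \<longlonglongrightarrow> 0"
        proof (cases "x \<in> U")
          case True
          then obtain k where "x \<in> A k" unfolding U_def by auto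
          then have "\<forall>n\<ge>Suc k. indicator (U - B n) x * G x = 0" unfolding B_def
            by (auto simp: indicator_def)
          then show ?thesis by (intro tendsto_eventually) (auto simp: eventually_sequentially)
        next
          case False then show ?thesis by simp
        qed
      qed
      show "AE x in M. norm (indicator (U - B n) x * G x) \<le> G x" for n
        using G0 by (intro AE_I2) (auto simp: indicator_def)
    qed
    have "(\<lambda>n. a (U - B n)) \<longlonglongrightarrow> 0"
    proof (rule Lim_null_comparison)
      show "\<forall>\<^sub>F n in sequentially. norm (a (U - B n)) \<le> 2 * (\<integral>x. indicator (U - B n) x * G x \<partial>M)"
      proof (rule always_eventually, rule allI)
        fix n
        have "U - B n \<in> sets M" using Us Bs by auto
        then show "norm (a (U - B n)) \<le> 2 * (\<integral>x. indicator (U - B n) x * G x \<partial>M)"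
          using nub[of "U - B n"] intnn[of "U - B n"] unfolding a_def by auto
      qed
      show "(\<lambda>n. 2 * (\<integral>x. indicator (U - B n) x * G x \<partial>M)) \<longlonglongrightarrow> 0"
        using tendsto_mult_right[OF dc, of 2] by simp
    qed
    then have "(\<lambda>n. a U - a (U - B n)) \<longlonglongrightarrow> a U - 0" by (intro tendsto_diff) auto
    moreover have "a U - a (U - B n) = a (B n)" for n using split[of n] by simp
    ultimately show ?thesis unfolding U_def B_def by simp
  qed
  define \<mu> where "\<mu> E = ennreal (a E)" for E
  have ca: "countably_additive (sets M) \<mu>"
    unfolding countably_additive_def
  proof (intro allI impI)
    fix A :: "nat \<Rightarrow> 'm set" assume A: "range A \<subseteq> sets M" "disjoint_family A" "(\<Union>i. A i) \<in> sets M"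
    have "(\<lambda>i. a (A i)) sums a (\<Union>i. A i)"
      unfolding sums_def using lim[OF A(1,2)] fin[OF A(1,2)] by simp
    then have "(\<lambda>i. ennreal (a (A i))) sums ennreal (a (\<Union>i. A i))"
      using a_nn A by (subst sums_ennreal) auto
    then show "(\<Sum>i. \<mu> (A i)) = \<mu> (\<Union>i. A i)" unfolding \<mu>_def by (rule sums_unique[symmetric])
  qed
  have pos: "positive (sets M) \<mu>"
  proof -
    have "a {} = 0" unfolding a_def nu_def by (simp add: S_zero)
    then show ?thesis unfolding positive_def \<mu>_def by simp
  qed
  define N1 where "N1 = measure_of (space M) (sets M) \<mu>"
  have sa: "sigma_algebra (space M) (sets M)" by (rule sets.sigma_algebra_axioms)
  have eN1: "E \<in> sets M \<Longrightarrow> emeasure N1 E = \<mu> E" for E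
    unfolding N1_def by (rule emeasure_measure_of_sigma[OF sa pos ca])
  have sN1: "sets N1 = sets M" unfolding N1_def by simp
  have spN1: "space N1 = space M" unfolding N1_def by simp
  define N2 where "N2 = density M G"
  have sN2: "sets N2 = sets N1" unfolding N2_def using sN1 by simp
  have spN2: "space N2 = space M" unfolding N2_def by simp
  have eN2: "emeasure N2 E = ennreal (\<integral>x. indicator E x * G x \<partial>M)" if E: "E \<in> sets M" for E
  proof -
    have "emeasure N2 E = (\<integral>\<^sup>+x. ennreal (G x) * indicator E x \<partial>M)"
      unfolding N2_def using E by (simp add: emeasure_density)
    also have "\<dots> = (\<integral>\<^sup>+x. ennreal (indicator E x * G x) \<partial>M)"
      by (intro nn_integral_cong) (auto simp: indicator_def)
    also have "\<dots> = ennreal (\<integral>x. indicator E x * G x \<partial>M)"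
      using GEI[OF E] G0 by (intro nn_integral_eq_integral) auto
    finally show ?thesis .
  qed
  have f1: "finite_measure N1"
    by (rule finite_measureI) (simp add: spN1 eN1 \<mu>_def)
  have f2: "finite_measure N2"
    by (rule finite_measureI) (simp add: spN2 eN2)
  obtain P where P: "P \<in> sets N1" and P1: "\<forall>X\<in>sets N1. X \<subseteq> P \<longrightarrow> N2 X \<le> N1 X"
    and P2: "\<forall>X\<in>sets N1. X \<inter> P = {} \<longrightarrow> N1 X \<le> N2 X"
    using finite_unsigned_Hahn_decomposition[OF f1 f2 sN2] by blast
  show ?thesis
  proof (intro bexI conjI ballI impI)
    show "P \<in> sets M" using P sN1 by simp
    fix E assume E: "E \<in> sets M"
    {
      assume "E \<subseteq> P"
      then have "N2 E \<le> N1 E" using P1 E sN1 by auto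
      then have "ennreal (\<integral>x. indicator E x * G x \<partial>M) \<le> ennreal (a E)"
        using eN1[OF E] eN2[OF E] by (simp add: \<mu>_def)
      then have "(\<integral>x. indicator E x * G x \<partial>M) \<le> a E" using a_nn[OF E] by simp
      then show "nu G y E \<ge> 0" unfolding a_def by simp
    next
      assume "E \<inter> P = {}"
      then have "N1 E \<le> N2 E" using P2 E sN1 by auto
      then have "ennreal (a E) \<le> ennreal (\<integral>x. indicator E x * G x \<partial>M)"
        using eN1[OF E] eN2[OF E] by (simp add: \<mu>_def)
      then have "a E \<le> (\<integral>x. indicator E x * G x \<partial>M)" using intnn[of E] by simp
      then show "nu G y E \<le> 0" unfolding a_def by simp
    }
  qed
qed

lemma S_split:
  assumes qI: "integrable M q" and E: "E \<in> sets M"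
  shows "S q = S (\<lambda>x. indicator E x * q x) + S (\<lambda>x. indicator (space M - E) x * q x)"
    and "(\<integral>x. q x \<partial>M) = (\<integral>x. indicator E x * q x \<partial>M) + (\<integral>x. indicator (space M - E) x * q x \<partial>M)"
proof -
  have I1: "integrable M (\<lambda>x. indicator E x * q x)"
    using integrable_mult_indicator[OF E qI] by simp
  have E2: "space M - E \<in> sets M" using E by auto
  have I2: "integrable M (\<lambda>x. indicator (space M - E) x * q x)"
    using integrable_mult_indicator[OF E2 qI] by simp
  have eq: "x \<in> space M \<Longrightarrow> q x = indicator E x * q x + indicator (space M - E) x * q x" for x
    by (auto simp: indicator_def)
  have "S q = S (\<lambda>x. indicator E x * q x + indicator (space M - E) x * q x)"
    by (rule S_cong) (use eq in \<open>auto intro!: AE_I2\<close>)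
  also have "\<dots> = S (\<lambda>x. indicator E x * q x) + S (\<lambda>x. indicator (space M - E) x * q x)"
    by (rule S_add[OF I1 I2])
  finally show "S q = S (\<lambda>x. indicator E x * q x) + S (\<lambda>x. indicator (space M - E) x * q x)" .
  have "(\<integral>x. q x \<partial>M) = (\<integral>x. indicator E x * q x + indicator (space M - E) x * q x \<partial>M)"
    by (rule Bochner_Integration.integral_cong) (use eq in auto)
  also have "\<dots> = (\<integral>x. indicator E x * q x \<partial>M) + (\<integral>x. indicator (space M - E) x * q x \<partial>M)"
    by (rule Bochner_Integration.integral_add[OF I1 I2])
  finally show "(\<integral>x. q x \<partial>M) = (\<integral>x. indicator E x * q x \<partial>M) + (\<integral>x. indicator (space M - E) x * q x \<partial>M)" .
qed

lemma S_upper: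
  assumes qI: "integrable M q" and q0: "\<And>x. q x \<ge> 0" and nv: "norm v \<le> 1"
  shows "blinfun_apply (S q) v \<le> (\<integral>x. q x \<partial>M)"
proof -
  have "blinfun_apply (S q) v \<le> \<bar>blinfun_apply (S q) v\<bar>" by simp
  also have "\<dots> \<le> norm v * (\<integral>x. \<bar>q x\<bar> \<partial>M)" by (rule S_bound[OF qI])
  also have "(\<integral>x. \<bar>q x\<bar> \<partial>M) = (\<integral>x. q x \<partial>M)" using q0 by simp
  also have "norm v * (\<integral>x. q x \<partial>M) \<le> 1 * (\<integral>x. q x \<partial>M)"
    using nv q0 by (intro mult_right_mono Bochner_Integration.integral_nonneg) auto
  finally show ?thesis by simp
qed

lemma restrict_good:
  assumes qI: "integrable M q" and q0: "\<And>x. q x \<ge> 0" and nv: "norm v \<le> 1" and E: "E \<in> sets M"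
    and good: "blinfun_apply (S q) v \<ge> (\<integral>x. q x \<partial>M) - \<kappa>"
  shows "blinfun_apply (S (\<lambda>x. indicator E x * q x)) v \<ge> (\<integral>x. indicator E x * q x \<partial>M) - \<kappa>"
proof -
  have E2: "space M - E \<in> sets M" using E by auto
  have I2: "integrable M (\<lambda>x. indicator (space M - E) x * q x)"
    using integrable_mult_indicator[OF E2 qI] by simp
  have "blinfun_apply (S (\<lambda>x. indicator (space M - E) x * q x)) v \<le> (\<integral>x. indicator (space M - E) x * q x \<partial>M)"
    using q0 by (intro S_upper[OF I2 _ nv]) auto
  then show ?thesis using good S_split[OF qI E] by (simp add: blinfun.add_left)
qed

lemma nu_pos_ext:
  assumes GI: "integrable M G" and G0: "\<And>x. G x \<ge> 0" and E: "E \<in> sets M"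
    and hP: "\<forall>F\<in>sets M. F \<subseteq> E \<longrightarrow> nu G y F \<ge> 0"
    and qm: "q \<in> borel_measurable M" and q0: "\<And>x. 0 \<le> q x" and qC: "\<And>x. q x \<le> C * G x"
  shows "blinfun_apply (S (\<lambda>x. indicator E x * q x)) y \<ge> 0"
proof -
  have Gm[measurable]: "G \<in> borel_measurable M" using GI by (rule borel_measurable_integrable)
  note [measurable] = qm
  have qI: "integrable M q"
    by (rule Bochner_Integration.integrable_bound[of _ "\<lambda>x. C * G x"]) (use GI qm q0 qC in \<open>auto intro!: AE_I2 intro: order_trans[OF _ abs_ge_self]\<close>)
  have qEI: "integrable M (\<lambda>x. indicator E x * q x)"
    using integrable_mult_indicator[OF E qI] by simp
  define c where "c = norm y * (\<integral>x. G x \<partial>M)"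
  have c0: "c \<ge> 0" unfolding c_def using G0 by (intro mult_nonneg_nonneg Bochner_Integration.integral_nonneg) auto
  have bnd: "blinfun_apply (S (\<lambda>x. indicator E x * q x)) y \<ge> - c / real K" if K: "K \<ge> 1" for K :: nat
  proof -
    define C' where "C' = max C 0"
    define r where "r x = real K * q x / G x" for x
    define Nb where "Nb = nat \<lceil>real K * C'\<rceil>"
    define s where "s x = nat \<lfloor>r x\<rfloor>" for x
    define L where "L m = {x \<in> space M. real m \<le> r x \<and> r x < real m + 1}" for m :: nat
    have Ls: "L m \<in> sets M" for m unfolding L_def r_def by measurable
    have r0: "r x \<ge> 0" for x unfolding r_def using q0 G0 by simp
    have rb: "r x \<le> real K * C'" for x
    proof (cases "G x = 0")
      case True then show ?thesis unfolding r_def C'_def by simp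
    next
      case False
      then have Gp: "G x > 0" using G0[of x] by simp
      have "q x / G x \<le> C" using qC[of x] Gp by (simp add: divide_le_eq)
      then have "q x / G x \<le> C'" unfolding C'_def by simp
      then have "real K * (q x / G x) \<le> real K * C'" by (intro mult_left_mono) auto
      then show ?thesis unfolding r_def by simp
    qed
    have sNb: "s x \<le> Nb" for x
      unfolding s_def Nb_def using rb[of x] r0[of x]
      by (intro nat_mono) (meson ceiling_correct floor_le_ceiling le_floor_iff order.trans floor_mono)
    have Lchar: "x \<in> space M \<Longrightarrow> (x \<in> L m) = (m = s x)" for x m
    proof -
      assume x: "x \<in> space M"
      have "(real m \<le> r x \<and> r x < real m + 1) = (\<lfloor>r x\<rfloor> = int m)"
        by (simp add: floor_eq_iff)
      also have "\<dots> = (m = s x)" unfolding s_def using r0[of x] by auto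
      finally show ?thesis unfolding L_def using x by simp
    qed
    define qK where "qK x = (\<Sum>m\<in>{..Nb}. (real m / real K) * (indicator (E \<inter> L m) x * G x))" for x
    have LEs: "E \<inter> L m \<in> sets M" for m using E Ls by auto
    have tI: "integrable M (\<lambda>x. indicator (E \<inter> L m) x * G x)" for m
      using integrable_mult_indicator[OF LEs GI] by simp
    have qKI: "integrable M qK" unfolding qK_def using tI by auto
    have SqK: "blinfun_apply (S qK) y \<ge> 0"
    proof -
      have "S qK = (\<Sum>m\<in>{..Nb}. S (\<lambda>x. (real m / real K) * (indicator (E \<inter> L m) x * G x)))"
        unfolding qK_def by (rule S_sum) (use tI in auto)
      also have "\<dots> = (\<Sum>m\<in>{..Nb}. (real m / real K) *\<^sub>R S (\<lambda>x. indicator (E \<inter> L m) x * G x))"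
        by (intro sum.cong refl S_scale tI)
      finally have "blinfun_apply (S qK) y = (\<Sum>m\<in>{..Nb}. (real m / real K) * nu G y (E \<inter> L m))"
        unfolding nu_def by (simp add: blinfun.sum_left blinfun.scaleR_left)
      also have "\<dots> \<ge> 0" using hP LEs by (intro sum_nonneg mult_nonneg_nonneg) auto
      finally show ?thesis by simp
    qed
    have qKv: "qK x = indicator E x * (G x * real (s x) / real K)" if x: "x \<in> space M" for x
    proof -
      have "qK x = (\<Sum>m\<in>{..Nb}. if m = s x then (real m / real K) * (indicator E x * G x) else 0)"
        unfolding qK_def using Lchar[OF x] by (intro sum.cong) (auto simp: indicator_def)
      also have "\<dots> = (real (s x) / real K) * (indicator E x * G x)"
        using sNb[of x] by (simp add: sum.delta')
      finally show ?thesis by simp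
    qed
    have diff: "0 \<le> indicator E x * q x - qK x \<and> indicator E x * q x - qK x \<le> G x / real K"
      if x: "x \<in> space M" for x
    proof (cases "G x = 0")
      case True
      then have "q x = 0" using qC[of x] q0[of x] by simp
      then show ?thesis using qKv[OF x] True by simp
    next
      case False
      then have Gp: "G x > 0" using G0[of x] by simp
      have Kp: "real K > 0" using K by simp
      have f1: "real (s x) \<le> r x" unfolding s_def using r0[of x] by simp
      have f2: "r x < real (s x) + 1" unfolding s_def using r0[of x] by linarith
      have g1: "G x * real (s x) / real K \<le> q x"
      proof -
        have "G x * real (s x) \<le> G x * r x" using f1 Gp by (intro mult_left_mono) auto
        also have "\<dots> = real K * q x" unfolding r_def using Gp by simp
        finally show ?thesis using Kp by (simp add: divide_le_eq mult.commute)
      qed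
      have g2: "q x \<le> G x * real (s x) / real K + G x / real K"
      proof -
        have "real K * q x = G x * r x" unfolding r_def using Gp by simp
        also have "\<dots> \<le> G x * (real (s x) + 1)" using f2 Gp by (intro mult_left_mono) auto
        finally have "real K * q x \<le> G x * real (s x) + G x" by (simp add: algebra_simps)
        then show ?thesis using Kp by (simp add: field_simps)
      qed
      show ?thesis using qKv[OF x] g1 g2 by (auto simp: indicator_def)
    qed
    have dI: "integrable M (\<lambda>x. indicator E x * q x - qK x)" using qEI qKI by auto
    have "blinfun_apply (S (\<lambda>x. indicator E x * q x)) y = blinfun_apply (S (\<lambda>x. indicator E x * q x - qK x)) y + blinfun_apply (S qK) y"
      using S_diff[OF qEI qKI] by (simp add: blinfun.diff_left)
    moreover have "\<bar>blinfun_apply (S (\<lambda>x. indicator E x * q x - qK x)) y\<bar> \<le> c / real K"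
    proof -
      have "\<bar>blinfun_apply (S (\<lambda>x. indicator E x * q x - qK x)) y\<bar> \<le> norm y * (\<integral>x. \<bar>indicator E x * q x - qK x\<bar> \<partial>M)"
        by (rule S_bound[OF dI])
      also have "(\<integral>x. \<bar>indicator E x * q x - qK x\<bar> \<partial>M) \<le> (\<integral>x. G x / real K \<partial>M)"
        using diff GI dI by (intro integral_mono) auto
      then have "norm y * (\<integral>x. \<bar>indicator E x * q x - qK x\<bar> \<partial>M) \<le> norm y * (\<integral>x. G x / real K \<partial>M)"
        by (intro mult_left_mono) auto
      also have "\<dots> = c / real K" unfolding c_def by simp
      finally show ?thesis .
    qed
    ultimately show ?thesis using SqK by linarith
  qed
  show ?thesis
  proof (rule ccontr)
    assume "\<not> ?thesis"
    then have neg: "blinfun_apply (S (\<lambda>x. indicator E x * q x)) y < 0" by simp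
    define v where "v = - blinfun_apply (S (\<lambda>x. indicator E x * q x)) y"
    have vp: "v > 0" using neg v_def by simp
    obtain K :: nat where K: "real K > c / v" using reals_Archimedean2 by blast
    define K' where "K' = max K 1"
    have K'1: "K' \<ge> 1" unfolding K'_def by simp
    have "real K' > c / v" unfolding K'_def using K by linarith
    then have "real K' * v > c" using vp by (simp add: divide_less_eq)
    then have "c / real K' < v" using K'1 by (simp add: divide_less_eq mult.commute)
    then show False using bnd[OF K'1] v_def by linarith
  qed
qed

lemma mass_gen:
  assumes GI: "integrable M G" and G0: "\<And>x. G x \<ge> 0" and Q: "Q \<in> sets M"
    and hQ: "\<forall>F\<in>sets M. F \<subseteq> space M - Q \<longrightarrow> nu G v F \<le> 0" and nv: "norm v \<le> 1"
    and qm: "q \<in> borel_measurable M" and q0: "\<And>x. 0 \<le> q x" and qC: "\<And>x. q x \<le> C * G x"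
    and good: "blinfun_apply (S q) v \<ge> (\<integral>x. q x \<partial>M) - \<kappa>"
  shows "(\<integral>x. indicator (space M - Q) x * q x \<partial>M) \<le> \<kappa>"
proof -
  have qI: "integrable M q"
    by (rule Bochner_Integration.integrable_bound[of _ "\<lambda>x. C * G x"]) (use GI qm q0 qC in \<open>auto intro!: AE_I2 intro: order_trans[OF _ abs_ge_self]\<close>)
  have QI: "integrable M (\<lambda>x. indicator Q x * q x)"
    using integrable_mult_indicator[OF Q qI] by simp
  have Q2: "space M - Q \<in> sets M" using Q by auto
  have hQ': "\<forall>F\<in>sets M. F \<subseteq> space M - Q \<longrightarrow> nu G (- v) F \<ge> 0"
    using hQ unfolding nu_def by (simp add: blinfun.minus_right)
  have "blinfun_apply (S (\<lambda>x. indicator (space M - Q) x * q x)) (- v) \<ge> 0"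
    by (rule nu_pos_ext[OF GI G0 Q2 hQ' qm q0 qC])
  then have neg: "blinfun_apply (S (\<lambda>x. indicator (space M - Q) x * q x)) v \<le> 0"
    by (simp add: blinfun.minus_right)
  have up: "blinfun_apply (S (\<lambda>x. indicator Q x * q x)) v \<le> (\<integral>x. indicator Q x * q x \<partial>M)"
    using q0 by (intro S_upper[OF QI _ nv]) auto
  show ?thesis using good S_split[OF qI Q] neg up by (simp add: blinfun.add_left)
qed

end


definition Dp :: "'m measure \<Rightarrow> (nat \<Rightarrow> 'm set) \<Rightarrow> nat \<Rightarrow> 'm set" where
  "Dp M P n = P n - (\<Union>j<n. P j)"
definition Dm :: "'m measure \<Rightarrow> (nat \<Rightarrow> 'm set) \<Rightarrow> nat \<Rightarrow> 'm set" where
  "Dm M P n = (space M - P n) - (\<Union>j<n. space M - P j)"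

lemma geom2: "(\<Sum>i<N. (1/2::real)^i) = 2 - 2 * (1/2)^N"
  by (induction N) auto

lemma D_sets: assumes h: "\<And>j. P j \<in> sets M" shows "Dp M P n \<in> sets M \<and> Dm M P n \<in> sets M"
proof -
  have u1: "(\<Union>j<n. P j) \<in> sets M" by (rule sets.finite_UN) (auto intro: h)
  have u2: "(\<Union>j<n. space M - P j) \<in> sets M" by (rule sets.finite_UN) (auto intro: h)
  show ?thesis unfolding Dp_def Dm_def
    using sets.Diff[OF h u1] sets.Diff[OF sets.Diff[OF sets.top h] u2] by blast
qed

lemma D_disj:
  assumes Psub: "\<And>j. P j \<subseteq> space M" and a: "a \<ge> 1" and b: "b \<ge> 1"
  shows "Dp M P a \<inter> Dm M P b = {}"
    and "a \<noteq> b \<Longrightarrow> Dp M P a \<inter> Dp M P b = {}"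
    and "a \<noteq> b \<Longrightarrow> Dm M P a \<inter> Dm M P b = {}"
proof -
  show "Dp M P a \<inter> Dm M P b = {}"
  proof -
    have "\<omega> \<in> P 0" if "\<omega> \<in> Dm M P b" for \<omega> using that b unfolding Dm_def by auto
    moreover have "\<omega> \<notin> P 0" if "\<omega> \<in> Dp M P a" for \<omega> using that a unfolding Dp_def by auto
    ultimately show ?thesis by blast
  qed
  show "a \<noteq> b \<Longrightarrow> Dp M P a \<inter> Dp M P b = {}"
  proof -
    assume ab: "a \<noteq> b"
    have *: "Dp M P a \<inter> Dp M P b = {}" if "a < b" for a b
      using that unfolding Dp_def by auto
    show ?thesis using *[of a b] *[of b a] ab by (cases "a < b") (auto simp: Int_commute)
  qed
  show "a \<noteq> b \<Longrightarrow> Dm M P a \<inter> Dm M P b = {}"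
  proof -
    assume ab: "a \<noteq> b"
    have *: "Dm M P a \<inter> Dm M P b = {}" if "a < b" for a b
      using that unfolding Dm_def by auto
    show ?thesis using *[of a b] *[of b a] ab by (cases "a < b") (auto simp: Int_commute)
  qed
qed

lemma Dpm_disj: "Dp M P n \<inter> Dm M P n = {}"
  unfolding Dp_def Dm_def by auto

context l1d begin

lemma posneg_good:
  assumes hI: "integrable M h" and hn: "(\<integral>\<omega>. \<bar>h \<omega>\<bar> \<partial>M) \<le> 1" and nv: "norm v \<le> 1"
    and good: "blinfun_apply (S h) v \<ge> 1 - \<kappa>"
  shows "blinfun_apply (S (\<lambda>\<omega>. max (h \<omega>) 0)) v \<ge> (\<integral>\<omega>. max (h \<omega>) 0 \<partial>M) - \<kappa>"
    and "blinfun_apply (S (\<lambda>\<omega>. max (- h \<omega>) 0)) (- v) \<ge> (\<integral>\<omega>. max (- h \<omega>) 0 \<partial>M) - \<kappa>"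
proof -
  define ap where "ap \<omega> = max (h \<omega>) 0" for \<omega>
  define am where "am \<omega> = max (- h \<omega>) 0" for \<omega>
  have apI: "integrable M ap" unfolding ap_def using hI by (intro integrable_max) auto
  have amI: "integrable M am" unfolding am_def using hI by (intro integrable_max) auto
  have hsplit: "h = (\<lambda>\<omega>. ap \<omega> - am \<omega>)" unfolding ap_def am_def by (rule ext) auto
  have Sh: "S h = S ap - S am" unfolding hsplit by (rule S_diff[OF apI amI])
  have "(\<integral>\<omega>. \<bar>h \<omega>\<bar> \<partial>M) = (\<integral>\<omega>. ap \<omega> + am \<omega> \<partial>M)"
    unfolding ap_def am_def by (intro Bochner_Integration.integral_cong) auto
  also have "\<dots> = (\<integral>\<omega>. ap \<omega> \<partial>M) + (\<integral>\<omega>. am \<omega> \<partial>M)" by (rule Bochner_Integration.integral_add[OF apI amI])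
  finally have tot: "(\<integral>\<omega>. ap \<omega> \<partial>M) + (\<integral>\<omega>. am \<omega> \<partial>M) \<le> 1" using hn by simp
  have nmv: "norm (- v) \<le> 1" using nv by simp
  have u1: "blinfun_apply (S ap) v \<le> (\<integral>\<omega>. ap \<omega> \<partial>M)" by (rule S_upper[OF apI _ nv]) (simp add: ap_def)
  have u2: "blinfun_apply (S am) (- v) \<le> (\<integral>\<omega>. am \<omega> \<partial>M)" by (rule S_upper[OF amI _ nmv]) (simp add: am_def)
  have gv: "blinfun_apply (S ap) v - blinfun_apply (S am) v \<ge> 1 - \<kappa>"
    using good Sh by (simp add: blinfun.diff_left)
  have neg: "blinfun_apply (S am) (- v) = - blinfun_apply (S am) v" by (simp add: blinfun.minus_right)
  show "blinfun_apply (S (\<lambda>\<omega>. max (h \<omega>) 0)) v \<ge> (\<integral>\<omega>. max (h \<omega>) 0 \<partial>M) - \<kappa>"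
    using gv u2 neg tot unfolding ap_def[symmetric] by linarith
  show "blinfun_apply (S (\<lambda>\<omega>. max (- h \<omega>) 0)) (- v) \<ge> (\<integral>\<omega>. max (- h \<omega>) 0 \<partial>M) - \<kappa>"
    using gv u1 neg tot unfolding am_def[symmetric] by linarith
qed

lemma nu_neg: "nu G (- v) E = - nu G v E"
  unfolding nu_def by (simp add: blinfun.minus_right)

lemma pattern_density:
  assumes GI: "integrable M G" and G0: "\<And>\<omega>. G \<omega> \<ge> 0"
    and Ps: "\<And>j. P j \<in> sets M"
    and Ppos: "\<And>j E. E \<in> sets M \<Longrightarrow> E \<subseteq> P j \<Longrightarrow> nu G (y j) E \<ge> 0"
    and Pneg: "\<And>j E. E \<in> sets M \<Longrightarrow> E \<inter> P j = {} \<Longrightarrow> nu G (y j) E \<le> 0"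
    and ny: "\<And>j. norm (y j) = 1"
    and hI: "integrable M h" and hn: "(\<integral>\<omega>. \<bar>h \<omega>\<bar> \<partial>M) \<le> 1" and hb: "\<And>\<omega>. \<bar>h \<omega>\<bar> \<le> C * G \<omega>"
    and nx: "norm x = 1"
    and sx: "blinfun_apply (S h) x \<ge> 1 - \<beta>"
    and sy: "\<And>j. j < n \<Longrightarrow> blinfun_apply (S h) (- y j) \<ge> 1 - \<beta> * (1/2)^j"
    and syn: "blinfun_apply (S h) (y n) \<ge> 1 - \<beta> * (1/2)^n"
    and b0: "0 < \<beta>" and b1: "\<beta> \<le> 1/10"
  defines "p \<equiv> \<lambda>\<omega>. indicator (Dp M P n) \<omega> * max (h \<omega>) 0 - indicator (Dm M P n) \<omega> * max (- h \<omega>) 0"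
  shows "integrable M p" and "(\<integral>\<omega>. \<bar>p \<omega>\<bar> \<partial>M) \<ge> 1/2"
    and "blinfun_apply (S p) x \<ge> (\<integral>\<omega>. \<bar>p \<omega>\<bar> \<partial>M) - 2 * \<beta>"
    and "\<And>\<omega>. (indicator (Dp M P n) \<omega> - indicator (Dm M P n) \<omega>) * p \<omega> = \<bar>p \<omega>\<bar>"
    and "\<And>\<omega>. \<omega> \<notin> Dp M P n \<union> Dm M P n \<Longrightarrow> p \<omega> = 0"
proof -
  define ap where "ap \<omega> = max (h \<omega>) 0" for \<omega>
  define am where "am \<omega> = max (- h \<omega>) 0" for \<omega>
  define Dpn where "Dpn = Dp M P n"
  define Dmn where "Dmn = Dm M P n"
  have pdef: "p = (\<lambda>\<omega>. indicator Dpn \<omega> * ap \<omega> - indicator Dmn \<omega> * am \<omega>)"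
    unfolding p_def ap_def am_def Dpn_def Dmn_def by simp
  have hm[measurable]: "h \<in> borel_measurable M" using hI by (rule borel_measurable_integrable)
  have apm[measurable]: "ap \<in> borel_measurable M" unfolding ap_def by measurable
  have amm[measurable]: "am \<in> borel_measurable M" unfolding am_def by measurable
  have ap0: "ap \<omega> \<ge> 0" and am0: "am \<omega> \<ge> 0" for \<omega> unfolding ap_def am_def by auto
  have apC: "ap \<omega> \<le> C * G \<omega>" and amC: "am \<omega> \<le> C * G \<omega>" for \<omega>
    unfolding ap_def am_def using hb[of \<omega>] by auto
  have apI: "integrable M ap" unfolding ap_def using hI by (intro integrable_max) auto
  have amI: "integrable M am" unfolding am_def using hI by (intro integrable_max) auto
  have Dsets: "Dpn \<in> sets M" "Dmn \<in> sets M" using D_sets[OF Ps] unfolding Dpn_def Dmn_def by auto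
  have Psub: "P j \<subseteq> space M" for j using Ps sets.sets_into_space by blast
  have nyj: "norm (y j) \<le> 1" "norm (- y j) \<le> 1" for j using ny[of j] by auto
  note pg = posneg_good[OF hI hn]
  have gx1: "blinfun_apply (S ap) x \<ge> (\<integral>\<omega>. ap \<omega> \<partial>M) - \<beta>"
    using pg(1)[of x \<beta>] nx sx unfolding ap_def by simp
  have gx2: "blinfun_apply (S am) (- x) \<ge> (\<integral>\<omega>. am \<omega> \<partial>M) - \<beta>"
    using pg(2)[of x \<beta>] nx sx unfolding am_def by simp
  have hQ1: "\<forall>F\<in>sets M. F \<subseteq> space M - (space M - P j) \<longrightarrow> nu G (- y j) F \<le> 0" for j
    using Ppos by (auto simp: nu_neg)
  have hQ2: "\<forall>F\<in>sets M. F \<subseteq> space M - P j \<longrightarrow> nu G (y j) F \<le> 0" for j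
    using Pneg by blast
  have compl: "space M - (space M - P j) = P j" for j using Psub[of j] by blast
  have Qs: "space M - P j \<in> sets M" for j using Ps by auto
  have m1: "(\<integral>\<omega>. indicator (P j) \<omega> * ap \<omega> \<partial>M) \<le> \<beta> * (1/2)^j" if j: "j < n" for j
  proof -
    have good: "blinfun_apply (S ap) (- y j) \<ge> (\<integral>\<omega>. ap \<omega> \<partial>M) - \<beta> * (1/2)^j"
      using pg(1)[OF nyj(2) sy[OF j]] unfolding ap_def by simp
    show ?thesis using mass_gen[OF GI G0 Qs hQ1 nyj(2) apm ap0 apC good] unfolding compl .
  qed
  have m2: "(\<integral>\<omega>. indicator (space M - P n) \<omega> * ap \<omega> \<partial>M) \<le> \<beta> * (1/2)^n"
  proof -
    have good: "blinfun_apply (S ap) (y n) \<ge> (\<integral>\<omega>. ap \<omega> \<partial>M) - \<beta> * (1/2)^n"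
      using pg(1)[OF nyj(1) syn] unfolding ap_def by simp
    show ?thesis by (rule mass_gen[OF GI G0 Ps hQ2 nyj(1) apm ap0 apC good])
  qed
  have m3: "(\<integral>\<omega>. indicator (space M - P j) \<omega> * am \<omega> \<partial>M) \<le> \<beta> * (1/2)^j" if j: "j < n" for j
  proof -
    have good: "blinfun_apply (S am) (y j) \<ge> (\<integral>\<omega>. am \<omega> \<partial>M) - \<beta> * (1/2)^j"
      using pg(2)[OF nyj(2) sy[OF j]] unfolding am_def by simp
    show ?thesis by (rule mass_gen[OF GI G0 Ps hQ2 nyj(1) amm am0 amC good])
  qed
  have m4: "(\<integral>\<omega>. indicator (P n) \<omega> * am \<omega> \<partial>M) \<le> \<beta> * (1/2)^n"
  proof -
    have good: "blinfun_apply (S am) (- y n) \<ge> (\<integral>\<omega>. am \<omega> \<partial>M) - \<beta> * (1/2)^n"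
      using pg(2)[OF nyj(1) syn] unfolding am_def by simp
    show ?thesis using mass_gen[OF GI G0 Qs hQ1 nyj(2) amm am0 amC good] unfolding compl .
  qed
  have PI: "integrable M (\<lambda>\<omega>. indicator E \<omega> * q \<omega>)" if "E \<in> sets M" "integrable M q" for E and q :: "'m \<Rightarrow> real"
    using integrable_mult_indicator[OF that] by simp
  have gsum: "\<beta> * (1/2)^n + (\<Sum>j<n. \<beta> * (1/2)^j) \<le> 2 * \<beta>"
  proof -
    have "\<beta> * (1/2)^n + (\<Sum>j<n. \<beta> * (1/2)^j) = \<beta> * (\<Sum>j<Suc n. (1/2)^j)"
      by (simp add: sum_distrib_left[symmetric] distrib_left)
    also have "\<dots> = \<beta> * (2 - 2 * (1/2)^Suc n)" by (simp only: geom2)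
    also have "\<dots> \<le> 2 * \<beta>" using b0 by (simp add: algebra_simps)
    finally show ?thesis .
  qed
  have c1: "(\<integral>\<omega>. indicator (space M - Dpn) \<omega> * ap \<omega> \<partial>M) \<le> 2 * \<beta>"
  proof -
    have "(\<integral>\<omega>. indicator (space M - Dpn) \<omega> * ap \<omega> \<partial>M) \<le>
          (\<integral>\<omega>. indicator (space M - P n) \<omega> * ap \<omega> + (\<Sum>j<n. indicator (P j) \<omega> * ap \<omega>) \<partial>M)"
    proof (rule integral_mono)
      show "integrable M (\<lambda>\<omega>. indicator (space M - Dpn) \<omega> * ap \<omega>)" using Dsets apI by (intro PI) auto
      show "integrable M (\<lambda>\<omega>. indicator (space M - P n) \<omega> * ap \<omega> + (\<Sum>j<n. indicator (P j) \<omega> * ap \<omega>))"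
        by (rule Bochner_Integration.integrable_add[OF PI[OF Qs apI] Bochner_Integration.integrable_sum[OF PI[OF Ps apI]]])
      fix \<omega> assume \<omega>: "\<omega> \<in> space M"
      have s0: "(\<Sum>j<n. indicator (P j) \<omega> * ap \<omega>) \<ge> 0" using ap0 by (intro sum_nonneg) auto
      show "indicator (space M - Dpn) \<omega> * ap \<omega> \<le> indicator (space M - P n) \<omega> * ap \<omega> + (\<Sum>j<n. indicator (P j) \<omega> * ap \<omega>)"
      proof (cases "\<omega> \<in> Dpn")
        case True then show ?thesis using s0 ap0[of \<omega>] by simp
      next
        case False
        then have "\<omega> \<notin> P n \<or> (\<exists>j<n. \<omega> \<in> P j)" unfolding Dpn_def Dp_def by auto
        then show ?thesis
        proof
          assume "\<omega> \<notin> P n" then show ?thesis using False \<omega> s0 by simp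
        next
          assume "\<exists>j<n. \<omega> \<in> P j"
          then obtain j where j: "j < n" "\<omega> \<in> P j" by blast
          have "indicator (P j) \<omega> * ap \<omega> \<le> (\<Sum>j<n. indicator (P j) \<omega> * ap \<omega>)"
            using j ap0 by (intro member_le_sum) auto
          then show ?thesis using j False \<omega> ap0[of \<omega>] by (auto simp: indicator_def)
        qed
      qed
    qed
    also have "\<dots> = (\<integral>\<omega>. indicator (space M - P n) \<omega> * ap \<omega> \<partial>M) + (\<Sum>j<n. \<integral>\<omega>. indicator (P j) \<omega> * ap \<omega> \<partial>M)"
    proof -
      note ea = Bochner_Integration.integral_add[OF PI[OF Qs apI] Bochner_Integration.integrable_sum[OF PI[OF Ps apI]]]
      note es = Bochner_Integration.integral_sum[OF PI[OF Ps apI]]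
      show ?thesis by (simp only: ea es)
    qed
    also have "\<dots> \<le> \<beta> * (1/2)^n + (\<Sum>j<n. \<beta> * (1/2)^j)"
      using m1 m2 by (intro add_mono sum_mono) auto
    finally show ?thesis using gsum by linarith
  qed
  have c2: "(\<integral>\<omega>. indicator (space M - Dmn) \<omega> * am \<omega> \<partial>M) \<le> 2 * \<beta>"
  proof -
    have "(\<integral>\<omega>. indicator (space M - Dmn) \<omega> * am \<omega> \<partial>M) \<le>
          (\<integral>\<omega>. indicator (P n) \<omega> * am \<omega> + (\<Sum>j<n. indicator (space M - P j) \<omega> * am \<omega>) \<partial>M)"
    proof (rule integral_mono)
      show "integrable M (\<lambda>\<omega>. indicator (space M - Dmn) \<omega> * am \<omega>)" using Dsets amI by (intro PI) auto
      show "integrable M (\<lambda>\<omega>. indicator (P n) \<omega> * am \<omega> + (\<Sum>j<n. indicator (space M - P j) \<omega> * am \<omega>))"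
        by (rule Bochner_Integration.integrable_add[OF PI[OF Ps amI] Bochner_Integration.integrable_sum[OF PI[OF Qs amI]]])
      fix \<omega> assume \<omega>: "\<omega> \<in> space M"
      have s0: "(\<Sum>j<n. indicator (space M - P j) \<omega> * am \<omega>) \<ge> 0" using am0 by (intro sum_nonneg) auto
      show "indicator (space M - Dmn) \<omega> * am \<omega> \<le> indicator (P n) \<omega> * am \<omega> + (\<Sum>j<n. indicator (space M - P j) \<omega> * am \<omega>)"
      proof (cases "\<omega> \<in> Dmn")
        case True then show ?thesis using s0 am0[of \<omega>] by simp
      next
        case False
        then have "\<omega> \<in> P n \<or> (\<exists>j<n. \<omega> \<in> space M - P j)" unfolding Dmn_def Dm_def using \<omega> by auto
        then show ?thesis
        proof
          assume "\<omega> \<in> P n" then show ?thesis using False \<omega> s0 by simp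
        next
          assume "\<exists>j<n. \<omega> \<in> space M - P j"
          then obtain j where j: "j < n" "\<omega> \<in> space M - P j" by blast
          have "indicator (space M - P j) \<omega> * am \<omega> \<le> (\<Sum>j<n. indicator (space M - P j) \<omega> * am \<omega>)"
            using j am0 by (intro member_le_sum) auto
          then show ?thesis using j False \<omega> am0[of \<omega>] by (auto simp: indicator_def)
        qed
      qed
    qed
    also have "\<dots> = (\<integral>\<omega>. indicator (P n) \<omega> * am \<omega> \<partial>M) + (\<Sum>j<n. \<integral>\<omega>. indicator (space M - P j) \<omega> * am \<omega> \<partial>M)"
    proof -
      note ea = Bochner_Integration.integral_add[OF PI[OF Ps amI] Bochner_Integration.integrable_sum[OF PI[OF Qs amI]]]
      note es = Bochner_Integration.integral_sum[OF PI[OF Qs amI]]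
      show ?thesis by (simp only: ea es)
    qed
    also have "\<dots> \<le> \<beta> * (1/2)^n + (\<Sum>j<n. \<beta> * (1/2)^j)"
      using m3 m4 by (intro add_mono sum_mono) auto
    finally show ?thesis using gsum by linarith
  qed
  have i1: "(\<integral>\<omega>. indicator Dpn \<omega> * ap \<omega> \<partial>M) \<ge> (\<integral>\<omega>. ap \<omega> \<partial>M) - 2 * \<beta>"
    using S_split(2)[OF apI Dsets(1)] c1 by linarith
  have i2: "(\<integral>\<omega>. indicator Dmn \<omega> * am \<omega> \<partial>M) \<ge> (\<integral>\<omega>. am \<omega> \<partial>M) - 2 * \<beta>"
    using S_split(2)[OF amI Dsets(2)] c2 by linarith
  have dj: "Dpn \<inter> Dmn = {}" unfolding Dpn_def Dmn_def by (rule Dpm_disj)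
  have absp: "\<bar>p \<omega>\<bar> = indicator Dpn \<omega> * ap \<omega> + indicator Dmn \<omega> * am \<omega>" for \<omega>
    unfolding pdef using dj ap0[of \<omega>] am0[of \<omega>] by (auto simp: indicator_def)
  have I1: "integrable M (\<lambda>\<omega>. indicator Dpn \<omega> * ap \<omega>)" using Dsets apI by (intro PI)
  have I2: "integrable M (\<lambda>\<omega>. indicator Dmn \<omega> * am \<omega>)" using Dsets amI by (intro PI)
  show pI: "integrable M p" unfolding pdef using I1 I2 by auto
  have intp: "(\<integral>\<omega>. \<bar>p \<omega>\<bar> \<partial>M) = (\<integral>\<omega>. indicator Dpn \<omega> * ap \<omega> \<partial>M) + (\<integral>\<omega>. indicator Dmn \<omega> * am \<omega> \<partial>M)"
    unfolding absp by (rule Bochner_Integration.integral_add[OF I1 I2])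
  have inth: "(\<integral>\<omega>. \<bar>h \<omega>\<bar> \<partial>M) = (\<integral>\<omega>. ap \<omega> \<partial>M) + (\<integral>\<omega>. am \<omega> \<partial>M)"
  proof -
    have "(\<integral>\<omega>. \<bar>h \<omega>\<bar> \<partial>M) = (\<integral>\<omega>. ap \<omega> + am \<omega> \<partial>M)"
      unfolding ap_def am_def by (intro Bochner_Integration.integral_cong) auto
    also have "\<dots> = (\<integral>\<omega>. ap \<omega> \<partial>M) + (\<integral>\<omega>. am \<omega> \<partial>M)" by (rule Bochner_Integration.integral_add[OF apI amI])
    finally show ?thesis .
  qed
  have hbig: "(\<integral>\<omega>. \<bar>h \<omega>\<bar> \<partial>M) \<ge> 1 - \<beta>"
    using S_bound[OF hI, of x] nx sx by simp
  show "(\<integral>\<omega>. \<bar>p \<omega>\<bar> \<partial>M) \<ge> 1/2"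
    using intp inth hbig i1 i2 b1 by linarith
  have Sp: "blinfun_apply (S p) x = blinfun_apply (S (\<lambda>\<omega>. indicator Dpn \<omega> * ap \<omega>)) x
       + blinfun_apply (S (\<lambda>\<omega>. indicator Dmn \<omega> * am \<omega>)) (- x)"
    unfolding pdef S_diff[OF I1 I2] by (simp add: blinfun.diff_left blinfun.minus_right)
  have r1: "blinfun_apply (S (\<lambda>\<omega>. indicator Dpn \<omega> * ap \<omega>)) x \<ge> (\<integral>\<omega>. indicator Dpn \<omega> * ap \<omega> \<partial>M) - \<beta>"
    by (rule restrict_good[OF apI ap0 _ Dsets(1) gx1]) (simp add: nx)
  have r2: "blinfun_apply (S (\<lambda>\<omega>. indicator Dmn \<omega> * am \<omega>)) (- x) \<ge> (\<integral>\<omega>. indicator Dmn \<omega> * am \<omega> \<partial>M) - \<beta>"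
    by (rule restrict_good[OF amI am0 _ Dsets(2) gx2]) (simp add: nx)
  show "blinfun_apply (S p) x \<ge> (\<integral>\<omega>. \<bar>p \<omega>\<bar> \<partial>M) - 2 * \<beta>"
    using Sp r1 r2 intp by linarith
  show "(indicator (Dp M P n) \<omega> - indicator (Dm M P n) \<omega>) * p \<omega> = \<bar>p \<omega>\<bar>" for \<omega>
    unfolding absp unfolding pdef Dpn_def[symmetric] Dmn_def[symmetric] using dj by (auto simp: indicator_def)
  show "\<omega> \<notin> Dp M P n \<union> Dm M P n \<Longrightarrow> p \<omega> = 0" for \<omega>
    unfolding pdef Dpn_def Dmn_def by simp
qed

end


lemma dominate:
  fixes h :: "nat \<Rightarrow> 'x \<Rightarrow> 'm \<Rightarrow> real" and M :: "'m measure"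
  assumes fin: "finite A" and hi: "\<And>n x. x \<in> A \<Longrightarrow> integrable M (h n x)"
    and hb: "\<And>n x. x \<in> A \<Longrightarrow> (\<integral>\<omega>. \<bar>h n x \<omega>\<bar> \<partial>M) \<le> 1"
  shows "\<exists>G Z. integrable M G \<and> (\<forall>\<omega>. G \<omega> \<ge> 0) \<and> Z \<in> sets M \<and> (AE \<omega> in M. \<omega> \<notin> Z) \<and>
     (\<forall>n x \<omega>. x \<in> A \<longrightarrow> \<omega> \<in> space M \<longrightarrow> \<omega> \<notin> Z \<longrightarrow> \<bar>h n x \<omega>\<bar> \<le> 2^n * G \<omega>)"
proof -
  define H where "H n \<omega> = (\<Sum>x\<in>A. \<bar>h n x \<omega>\<bar>)" for n \<omega>
  have Hm[measurable]: "H n \<in> borel_measurable M" for n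
    unfolding H_def by (intro borel_measurable_sum borel_measurable_abs borel_measurable_integrable hi)
  have H0: "H n \<omega> \<ge> 0" for n \<omega> unfolding H_def by (intro sum_nonneg) auto
  have HI: "integrable M (H n)" for n unfolding H_def by (rule Bochner_Integration.integrable_sum) (auto intro: hi)
  have Hint: "(\<integral>\<omega>. H n \<omega> \<partial>M) \<le> real (card A)" for n
  proof -
    have "(\<integral>\<omega>. H n \<omega> \<partial>M) = (\<Sum>x\<in>A. \<integral>\<omega>. \<bar>h n x \<omega>\<bar> \<partial>M)"
      unfolding H_def by (rule Bochner_Integration.integral_sum) (auto intro: hi)
    also have "\<dots> \<le> (\<Sum>x\<in>A. 1)" using hb by (intro sum_mono)
    finally show ?thesis by simp
  qed
  define Gs where "Gs \<omega> = (\<Sum>n. ennreal ((1/2)^n * H n \<omega>))" for \<omega>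
  have Gsm[measurable]: "Gs \<in> borel_measurable M" unfolding Gs_def by measurable
  have nnH: "(\<integral>\<^sup>+\<omega>. ennreal ((1/2)^n * H n \<omega>) \<partial>M) = ennreal ((1/2)^n * (\<integral>\<omega>. H n \<omega> \<partial>M))" for n
    using HI H0 by (subst nn_integral_eq_integral) auto
  have "(\<integral>\<^sup>+\<omega>. Gs \<omega> \<partial>M) = (\<Sum>n. \<integral>\<^sup>+\<omega>. ennreal ((1/2)^n * H n \<omega>) \<partial>M)"
    unfolding Gs_def by (rule nn_integral_suminf) measurable
  also have "\<dots> = (\<Sum>n. ennreal ((1/2)^n * (\<integral>\<omega>. H n \<omega> \<partial>M)))" using nnH by simp
  also have "\<dots> \<le> (\<Sum>n. ennreal ((1/2)^n * real (card A)))"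
    using Hint by (intro suminf_le summableI ennreal_leI mult_left_mono) auto
  also have "\<dots> = ennreal (\<Sum>n. (1/2)^n * real (card A))"
    by (rule suminf_ennreal2) (auto intro: summable_mult2 summable_geometric)
  finally have Gsfin: "(\<integral>\<^sup>+\<omega>. Gs \<omega> \<partial>M) \<noteq> \<infinity>" using top_neq_ennreal by (auto simp: top_unique)
  define Z where "Z = {\<omega> \<in> space M. Gs \<omega> = \<infinity>}"
  have Zs: "Z \<in> sets M" unfolding Z_def by measurable
  have AEZ: "AE \<omega> in M. \<omega> \<notin> Z"
    using nn_integral_noteq_infinite[OF Gsm Gsfin] unfolding Z_def by eventually_elim auto
  define G where "G \<omega> = enn2real (Gs \<omega>)" for \<omega>
  have G0: "G \<omega> \<ge> 0" for \<omega> unfolding G_def by simp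
  have Gm[measurable]: "G \<in> borel_measurable M" unfolding G_def by measurable
  have GI: "integrable M G"
  proof -
    have "(\<integral>\<^sup>+\<omega>. ennreal (norm (G \<omega>)) \<partial>M) \<le> (\<integral>\<^sup>+\<omega>. Gs \<omega> \<partial>M)"
      unfolding G_def by (intro nn_integral_mono) (auto simp: ennreal_enn2real_if)
    then have "(\<integral>\<^sup>+\<omega>. ennreal (norm (G \<omega>)) \<partial>M) < \<infinity>" using Gsfin by (simp add: le_less_trans top.not_eq_extremum)
    then show ?thesis by (simp add: integrable_iff_bounded)
  qed
  have bound: "\<bar>h n x \<omega>\<bar> \<le> 2^n * G \<omega>" if x: "x \<in> A" and om: "\<omega> \<in> space M" "\<omega> \<notin> Z" for n x \<omega>
  proof -
    have fin\<omega>: "Gs \<omega> < top" using om unfolding Z_def by (simp add: top.not_eq_extremum)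
    have le: "ennreal ((1/2)^n * H n \<omega>) \<le> Gs \<omega>"
      unfolding Gs_def using sum_le_suminf[OF summableI, of "{n}" "\<lambda>n. ennreal ((1/2)^n * H n \<omega>)"] by simp
    have "enn2real (ennreal ((1/2)^n * H n \<omega>)) \<le> G \<omega>"
      unfolding G_def by (rule enn2real_mono[OF le fin\<omega>])
    then have "(1/2)^n * H n \<omega> \<le> G \<omega>" using H0 by simp
    then have "2^n * ((1/2)^n * H n \<omega>) \<le> 2^n * G \<omega>" by (intro mult_left_mono) auto
    then have "H n \<omega> \<le> 2^n * G \<omega>" by (simp add: power_one_over)
    moreover have "\<bar>h n x \<omega>\<bar> \<le> H n \<omega>" unfolding H_def using fin x by (intro member_le_sum) auto
    ultimately show ?thesis by linarith
  qed
  show ?thesis using GI G0 Zs AEZ bound by blast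
qed


lemma sum_pad:
  fixes u :: "nat \<Rightarrow> 'b::real_vector"
  assumes "n \<le> N"
  shows "(\<Sum>j\<le>N. (if j \<le> n then c j else 0) *\<^sub>R u j) = (\<Sum>j\<le>n. c j *\<^sub>R u j)"
  by (rule sum.mono_neutral_cong_right) (use assms in auto)

lemma sum_single:
  fixes u :: "nat \<Rightarrow> 'b::real_vector"
  shows "(\<Sum>j\<le>k. (if j = k then 1 else 0) *\<^sub>R u j) = u k"
proof -
  have "(\<Sum>j\<le>k. (if j = k then 1 else 0) *\<^sub>R u j) = (\<Sum>j\<le>k. if j = k then u j else 0)"
    by (intro sum.cong) auto
  also have "\<dots> = u k" by simp
  finally show ?thesis .
qed

lemma span_range_sub:
  fixes u :: "nat \<Rightarrow> 'b::real_vector"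
  shows "span (range u) \<subseteq> {v. \<exists>n c. v = (\<Sum>j\<le>n. c j *\<^sub>R u j)}"
proof (rule span_minimal)
  show "range u \<subseteq> {v. \<exists>n c. v = (\<Sum>j\<le>n. c j *\<^sub>R u j)}"
  proof
    fix v assume "v \<in> range u"
    then obtain k where k: "v = u k" by auto
    have "(\<Sum>j\<le>k. (if j = k then 1 else 0) *\<^sub>R u j) = u k"
      by (rule sum_single)
    then show "v \<in> {v. \<exists>n c. v = (\<Sum>j\<le>n. c j *\<^sub>R u j)}" using k by (intro CollectI exI[of _ k] exI[of _ "\<lambda>j. if j = k then 1 else 0"]) simp
  qed
  show "subspace {v. \<exists>n c. v = (\<Sum>j\<le>n. c j *\<^sub>R u j)}"
  proof (rule subspaceI)
    show "0 \<in> {v. \<exists>n c. v = (\<Sum>j\<le>n. c j *\<^sub>R u j)}"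
      by (intro CollectI exI[of _ 0] exI[of _ "\<lambda>j. 0"]) simp
  next
    fix x y assume "x \<in> {v. \<exists>n c. v = (\<Sum>j\<le>n. c j *\<^sub>R u j)}" "y \<in> {v. \<exists>n c. v = (\<Sum>j\<le>n. c j *\<^sub>R u j)}"
    then obtain n c m d where x: "x = (\<Sum>j\<le>n. c j *\<^sub>R u j)" and y: "y = (\<Sum>j\<le>m. d j *\<^sub>R u j)" by blast
    define N where "N = max n m"
    have "x = (\<Sum>j\<le>N. (if j \<le> n then c j else 0) *\<^sub>R u j)" unfolding x N_def by (rule sum_pad[symmetric]) simp
    moreover have "y = (\<Sum>j\<le>N. (if j \<le> m then d j else 0) *\<^sub>R u j)" unfolding y N_def by (rule sum_pad[symmetric]) simp
    ultimately have xy: "x + y = (\<Sum>j\<le>N. ((if j \<le> n then c j else 0) + (if j \<le> m then d j else 0)) *\<^sub>R u j)"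
      by (simp add: sum.distrib scaleR_add_left)
    show "x + y \<in> {v. \<exists>n c. v = (\<Sum>j\<le>n. c j *\<^sub>R u j)}"
      by (rule CollectI, intro exI, rule xy)
  next
    fix a x assume "x \<in> {v. \<exists>n c. v = (\<Sum>j\<le>n. c j *\<^sub>R u j)}"
    then obtain n c where x: "x = (\<Sum>j\<le>n. c j *\<^sub>R u j)" by blast
    have ax: "a *\<^sub>R x = (\<Sum>j\<le>n. (a * c j) *\<^sub>R u j)" unfolding x by (simp add: scaleR_sum_right)
    show "a *\<^sub>R x \<in> {v. \<exists>n c. v = (\<Sum>j\<le>n. c j *\<^sub>R u j)}"
      by (rule CollectI, intro exI, rule ax)
  qed
qed

lemma sum_indicator_le1:
  assumes "finite I" "\<And>i j. i \<in> I \<Longrightarrow> j \<in> I \<Longrightarrow> i \<noteq> j \<Longrightarrow> E i \<inter> E j = {}"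
  shows "(\<Sum>i\<in>I. indicator (E i) x) \<le> (1::real)"
  using assms
proof (induction I rule: finite_induct)
  case empty then show ?case by simp
next
  case (insert i I)
  show ?case
  proof (cases "x \<in> E i")
    case True
    have "(\<Sum>j\<in>I. indicator (E j) x) = (0::real)"
      using insert True by (intro sum.neutral) (auto simp: indicator_def)
    then show ?thesis using insert by simp
  next
    case False
    then show ?thesis using insert by simp
  qed
qed

context l1d begin

lemma c0_abstract:
  fixes g :: "nat \<Rightarrow> 'm \<Rightarrow> real" and ph :: "nat \<Rightarrow> 'a \<Rightarrow> 'm \<Rightarrow> real"
  assumes gm: "\<And>m. g m \<in> borel_measurable M" and gb: "\<And>m \<omega>. \<bar>g m \<omega>\<bar> \<le> 1"
    and gsum: "\<And>N \<omega>. (\<Sum>m\<le>N. \<bar>g m \<omega>\<bar>) \<le> 1"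
    and Ane: "x0 \<in> A" and Asym: "\<And>x. x \<in> A \<Longrightarrow> -x \<in> A"
    and ph: "\<And>k x. x \<in> A \<Longrightarrow> integrable M (ph k x)"
    and phn: "\<And>k x. x \<in> A \<Longrightarrow> (\<integral>\<omega>. \<bar>ph k x \<omega>\<bar> \<partial>M) = 1"
    and phg: "\<And>k x. x \<in> A \<Longrightarrow> (\<integral>\<omega>. g k \<omega> * ph k x \<omega> \<partial>M) = 1"
    and phz: "\<And>k m x \<omega>. x \<in> A \<Longrightarrow> m \<noteq> k \<Longrightarrow> g m \<omega> * ph k x \<omega> = 0"
    and phx: "\<And>k x. x \<in> A \<Longrightarrow> blinfun_apply (S (ph k x)) x \<ge> 1 - \<delta>"
  shows "\<exists>u :: nat \<Rightarrow> (('a \<Rightarrow>\<^sub>L real) \<Rightarrow>\<^sub>L real).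
           (\<forall>n. norm (u n) = 1) \<and>
           (\<forall>n (c::nat \<Rightarrow> real). norm (\<Sum>j\<le>n. c j *\<^sub>R u j) = Max ((\<lambda>j. \<bar>c j\<bar>) ` {..n})) \<and>
           (\<forall>x\<in>A. \<forall>v\<in>closure (span (range u)). norm (canon x + v) \<ge> 1 - \<delta> + norm v)"
proof -
  define u where "u n = U (g n)" for n
  have canon_ap: "blinfun_apply (canon x) f = blinfun_apply f x" for x :: 'a and f
    unfolding canon_def by (subst bounded_linear_Blinfun_apply) (auto intro: blinfun.bounded_linear_left)
  define F where "F k x = (if x \<in> A then S (ph k x) else 0)" for k x
  have normF: "x \<in> A \<Longrightarrow> norm (F k x) = 1" for k x
    unfolding F_def using norm_S[OF ph] phn by simp
  have Fx: "x \<in> A \<Longrightarrow> blinfun_apply (F k x) x \<ge> 1 - \<delta>" for k x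
    unfolding F_def using phx by simp
  have uF: "blinfun_apply (u m) (F k x) = (if m = k then 1 else 0)" if x: "x \<in> A" for m k x
  proof -
    have "blinfun_apply (u m) (F k x) = (\<integral>\<omega>. g m \<omega> * ph k x \<omega> \<partial>M)"
      unfolding u_def F_def using x U_S[OF gm gb ph[OF x]] by simp
    then show ?thesis using phg[OF x] phz[OF x] by (cases "m = k") auto
  qed
  have sumF: "blinfun_apply (\<Sum>j\<le>n. c j *\<^sub>R u j) (F k x) = (if k \<le> n then c k else 0)"
    if x: "x \<in> A" for n c k x
  proof -
    have "blinfun_apply (\<Sum>j\<le>n. c j *\<^sub>R u j) (F k x) = (\<Sum>j\<le>n. c j * (if j = k then 1 else 0))"
      using uF[OF x] by (simp add: blinfun.sum_left blinfun.scaleR_left)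
    also have "\<dots> = (if k \<le> n then c k else 0)"
      by (simp add: if_distrib cong: if_cong)
    finally show ?thesis .
  qed
  have upper: "norm (\<Sum>j\<le>n. c j *\<^sub>R u j) \<le> Max ((\<lambda>j. \<bar>c j\<bar>) ` {..n})" for n c
  proof -
    define B where "B = Max ((\<lambda>j. \<bar>c j\<bar>) ` {..n})"
    have cB: "\<bar>c j\<bar> \<le> B" if "j \<le> n" for j unfolding B_def using that by (intro Max_ge) auto
    have B0: "B \<ge> 0" using cB[of 0] by simp
    have bnd: "\<bar>\<Sum>j\<le>n. c j * g j \<omega>\<bar> \<le> B" for \<omega>
    proof -
      have "\<bar>\<Sum>j\<le>n. c j * g j \<omega>\<bar> \<le> (\<Sum>j\<le>n. \<bar>c j\<bar> * \<bar>g j \<omega>\<bar>)"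
        by (rule order.trans[OF sum_abs]) (simp add: abs_mult)
      also have "\<dots> \<le> (\<Sum>j\<le>n. B * \<bar>g j \<omega>\<bar>)" using cB by (intro sum_mono mult_right_mono) auto
      also have "\<dots> = B * (\<Sum>j\<le>n. \<bar>g j \<omega>\<bar>)" by (simp add: sum_distrib_left)
      also have "\<dots> \<le> B * 1" using gsum B0 by (intro mult_left_mono) auto
      finally show ?thesis by simp
    qed
    have "(\<Sum>j\<le>n. c j *\<^sub>R u j) = U (\<lambda>\<omega>. \<Sum>j\<le>n. c j * g j \<omega>)"
      unfolding u_def by (rule U_sum[OF _ gm gb]) simp
    also have "norm \<dots> \<le> B" by (rule norm_U[OF _ bnd]) (use gm in measurable)
    finally show ?thesis unfolding B_def .
  qed
  have lower: "\<exists>f. norm f = 1 \<and> blinfun_apply (\<Sum>j\<le>n. c j *\<^sub>R u j) f = Max ((\<lambda>j. \<bar>c j\<bar>) ` {..n})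
               \<and> blinfun_apply f x \<ge> 1 - \<delta>" if x: "x \<in> A" for n c x
  proof -
    have "Max ((\<lambda>j. \<bar>c j\<bar>) ` {..n}) \<in> (\<lambda>j. \<bar>c j\<bar>) ` {..n}" by (intro Max_in) auto
    then obtain k where k: "k \<le> n" "\<bar>c k\<bar> = Max ((\<lambda>j. \<bar>c j\<bar>) ` {..n})"
      by (metis atMost_iff imageE)
    define \<sigma> where "\<sigma> = (if c k \<ge> 0 then 1 else -1::real)"
    have \<sigma>x: "\<sigma> *\<^sub>R x \<in> A" using x Asym unfolding \<sigma>_def by auto
    define f where "f = \<sigma> *\<^sub>R F k (\<sigma> *\<^sub>R x)"
    have "norm f = 1" unfolding f_def using normF[OF \<sigma>x] by (simp add: \<sigma>_def)
    moreover have "blinfun_apply (\<Sum>j\<le>n. c j *\<^sub>R u j) f = \<sigma> * c k"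
      unfolding f_def using sumF[where n=n and c=c and k=k, OF \<sigma>x] k(1) by (simp add: blinfun.scaleR_right)
    moreover have "\<sigma> * c k = \<bar>c k\<bar>" unfolding \<sigma>_def by auto
    moreover have "blinfun_apply f x = blinfun_apply (F k (\<sigma> *\<^sub>R x)) (\<sigma> *\<^sub>R x)"
      unfolding f_def by (simp add: blinfun.scaleR_right blinfun.scaleR_left)
    ultimately show ?thesis using Fx[OF \<sigma>x, of k] k(2) by (intro exI[of _ f]) auto
  qed
  have normsum: "norm (\<Sum>j\<le>n. c j *\<^sub>R u j) = Max ((\<lambda>j. \<bar>c j\<bar>) ` {..n})" for n c
  proof -
    obtain f where f: "norm f = 1" "blinfun_apply (\<Sum>j\<le>n. c j *\<^sub>R u j) f = Max ((\<lambda>j. \<bar>c j\<bar>) ` {..n})"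
      using lower[OF Ane] by blast
    have "\<bar>Max ((\<lambda>j. \<bar>c j\<bar>) ` {..n})\<bar> \<le> norm (\<Sum>j\<le>n. c j *\<^sub>R u j)"
      using norm_blinfun[of "\<Sum>j\<le>n. c j *\<^sub>R u j" f] f by simp
    then have "Max ((\<lambda>j. \<bar>c j\<bar>) ` {..n}) \<le> norm (\<Sum>j\<le>n. c j *\<^sub>R u j)"
      by (rule order_trans[OF abs_ge_self])
    then show ?thesis using upper[where n=n and c=c] by linarith
  qed
  have normu: "norm (u n) = 1" for n
  proof -
    have "(\<Sum>j\<le>n. (if j = n then 1 else 0) *\<^sub>R u j) = u n" by (rule sum_single)
    moreover have "Max ((\<lambda>j. \<bar>if j = n then 1 else 0::real\<bar>) ` {..n}) = 1"
      by (rule Max_eqI) (auto simp: image_def)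
    ultimately show ?thesis using normsum[where n=n and c="\<lambda>j. if j = n then 1 else 0"] by simp
  qed
  have spanest: "norm (canon x + v) \<ge> 1 - \<delta> + norm v" if x: "x \<in> A" and v: "v \<in> span (range u)" for x v
  proof -
    obtain n c where vs: "v = (\<Sum>j\<le>n. c j *\<^sub>R u j)" using v span_range_sub[of u] by blast
    obtain f where f: "norm f = 1" "blinfun_apply v f = norm v" "blinfun_apply f x \<ge> 1 - \<delta>"
      using lower[where n=n and c=c, OF x] normsum[where n=n and c=c] vs by auto
    have e: "blinfun_apply (canon x + v) f = blinfun_apply f x + norm v"
      using f canon_ap by (simp add: blinfun.add_left)
    have "\<bar>blinfun_apply (canon x + v) f\<bar> \<le> norm (canon x + v)"
      using norm_blinfun[of "canon x + v" f] f(1) by simp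
    then show ?thesis using e f(3) abs_ge_self[of "blinfun_apply (canon x + v) f"] by linarith
  qed
  have closest: "norm (canon x + v) \<ge> 1 - \<delta> + norm v" if x: "x \<in> A" and v: "v \<in> closure (span (range u))" for x v
  proof -
    have "closure (span (range u)) \<subseteq> {v. 1 - \<delta> + norm v \<le> norm (canon x + v)}"
    proof (rule closure_minimal)
      show "span (range u) \<subseteq> {v. 1 - \<delta> + norm v \<le> norm (canon x + v)}" using spanest[OF x] by auto
      show "closed {v. 1 - \<delta> + norm v \<le> norm (canon x + v)}"
        by (intro closed_Collect_le continuous_intros)
    qed
    then show ?thesis using v by auto
  qed
  show ?thesis using normu normsum closest by (intro exI[of _ u]) auto
qed

end


context l1d begin

lemma final_l1d:
  assumes oct: "octahedral TYPE('a)" and fin: "finite A" and sph: "A \<subseteq> sphere 0 1"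
    and x0: "x0 \<in> A" and Asym: "\<And>x. x \<in> A \<Longrightarrow> -x \<in> A" and b0: "0 < \<beta>" and b1: "\<beta> \<le> 1/10"
  shows "\<exists>u :: nat \<Rightarrow> (('a \<Rightarrow>\<^sub>L real) \<Rightarrow>\<^sub>L real).
           (\<forall>n. norm (u n) = 1) \<and>
           (\<forall>n (c::nat \<Rightarrow> real). norm (\<Sum>j\<le>n. c j *\<^sub>R u j) = Max ((\<lambda>j. \<bar>c j\<bar>) ` {..n})) \<and>
           (\<forall>x\<in>A. \<forall>v\<in>closure (span (range u)). norm (canon x + v) \<ge> 1 - 4 * \<beta> + norm v)"
proof -
  define y where "y = ys A (etaf \<beta>)"
  have ny: "norm (y j) = 1" for j
    using ys_prop[where e="etaf \<beta>" and n=j, OF oct fin etaf_pos[OF b0, of j]] unfolding y_def by blast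
  define w where "w n x = x + (\<Sum>j<Suc n. sgnp n j *\<^sub>R y j)" for n x
  define F where "F n x = (SOME F::'a \<Rightarrow>\<^sub>L real. norm F \<le> 1 \<and> blinfun_apply F (w n x) = norm (w n x))" for n x
  have Fp: "norm (F n x) \<le> 1 \<and> blinfun_apply (F n x) (w n x) = norm (w n x)" for n x
    unfolding F_def by (rule someI_ex[OF hahn_banach_norm])
  have est1: "blinfun_apply (F n x) x \<ge> 1 - \<beta>"
    and est2: "\<And>j. j < n \<Longrightarrow> - blinfun_apply (F n x) (y j) \<ge> 1 - \<beta> * (1/2)^j"
    and est3: "blinfun_apply (F n x) (y n) \<ge> 1 - \<beta> * (1/2)^n" if x: "x \<in> A" for n x
    using pattern_est[OF oct fin sph b0 x, of "F n x" n] Fp[of n x] unfolding w_def y_def by auto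
  define h where "h n x = T (F n x)" for n x
  have hI: "integrable M (h n x)" for n x unfolding h_def by (rule Tint)
  have hn: "(\<integral>\<omega>. \<bar>h n x \<omega>\<bar> \<partial>M) \<le> 1" for n x
    unfolding h_def using Tnorm[of "F n x"] Fp[of n x] by simp
  obtain G Z where GI: "integrable M G" and G0: "\<And>\<omega>. G \<omega> \<ge> 0" and Zs: "Z \<in> sets M"
    and AEZ: "AE \<omega> in M. \<omega> \<notin> Z"
    and hb: "\<And>n x \<omega>. x \<in> A \<Longrightarrow> \<omega> \<in> space M \<Longrightarrow> \<omega> \<notin> Z \<Longrightarrow> \<bar>h n x \<omega>\<bar> \<le> 2^n * G \<omega>"
    using dominate[OF fin, of M h] hI hn by blast
  define h' where "h' n x \<omega> = indicator (space M - Z) \<omega> * h n x \<omega>" for n x \<omega>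
  have SZ: "space M - Z \<in> sets M" using Zs by auto
  have h'I: "integrable M (h' n x)" for n x
    unfolding h'_def using integrable_mult_indicator[OF SZ hI[of n x]] by simp
  have h'AE: "AE \<omega> in M. h' n x \<omega> = h n x \<omega>" for n x
    using AEZ
  proof (rule AE_mp)
    show "AE \<omega> in M. \<omega> \<notin> Z \<longrightarrow> h' n x \<omega> = h n x \<omega>"
      by (rule AE_I2) (auto simp: h'_def indicator_def)
  qed
  have Sh': "S (h' n x) = F n x" for n x
    using S_cong[OF h'AE[of n x]] S_T'[of "F n x"] unfolding h_def by simp
  have h'n: "(\<integral>\<omega>. \<bar>h' n x \<omega>\<bar> \<partial>M) \<le> 1" for n x
  proof -
    have "(\<integral>\<omega>. \<bar>h' n x \<omega>\<bar> \<partial>M) = (\<integral>\<omega>. \<bar>h n x \<omega>\<bar> \<partial>M)"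
      using h'AE[of n x] h'I[of n x] hI[of n x] by (intro integral_cong_AE) (auto elim!: AE_mp)
    then show ?thesis using hn[of n x] by simp
  qed
  have h'b: "\<bar>h' n x \<omega>\<bar> \<le> 2^n * G \<omega>" if x: "x \<in> A" for n x \<omega>
  proof (cases "\<omega> \<in> space M - Z")
    case True then show ?thesis using hb[OF x] unfolding h'_def by auto
  next
    case False then show ?thesis unfolding h'_def using G0[of \<omega>] by simp
  qed
  define P where "P j = (SOME P. P \<in> sets M \<and> (\<forall>E\<in>sets M. E \<subseteq> P \<longrightarrow> nu G (y j) E \<ge> 0) \<and> (\<forall>E\<in>sets M. E \<inter> P = {} \<longrightarrow> nu G (y j) E \<le> 0))" for j
  have Pp: "P j \<in> sets M \<and> (\<forall>E\<in>sets M. E \<subseteq> P j \<longrightarrow> nu G (y j) E \<ge> 0) \<and> (\<forall>E\<in>sets M. E \<inter> P j = {} \<longrightarrow> nu G (y j) E \<le> 0)" for j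
  proof -
    have "\<exists>P\<in>sets M. (\<forall>E\<in>sets M. E \<subseteq> P \<longrightarrow> nu G (y j) E \<ge> 0) \<and> (\<forall>E\<in>sets M. E \<inter> P = {} \<longrightarrow> nu G (y j) E \<le> 0)"
      by (rule hahn_set[OF GI G0]) (simp add: ny)
    then have "\<exists>P. P \<in> sets M \<and> (\<forall>E\<in>sets M. E \<subseteq> P \<longrightarrow> nu G (y j) E \<ge> 0) \<and> (\<forall>E\<in>sets M. E \<inter> P = {} \<longrightarrow> nu G (y j) E \<le> 0)"
      by blast
    then show ?thesis unfolding P_def by (rule someI_ex)
  qed
  have Ps: "P j \<in> sets M" for j using Pp by blast
  have Psub: "P j \<subseteq> space M" for j using Ps sets.sets_into_space by blast
  have Ppos: "\<And>j E. E \<in> sets M \<Longrightarrow> E \<subseteq> P j \<Longrightarrow> nu G (y j) E \<ge> 0" using Pp by blast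
  have Pneg: "\<And>j E. E \<in> sets M \<Longrightarrow> E \<inter> P j = {} \<Longrightarrow> nu G (y j) E \<le> 0" using Pp by blast
  define p where "p n x \<omega> = indicator (Dp M P n) \<omega> * max (h' n x \<omega>) 0 - indicator (Dm M P n) \<omega> * max (- h' n x \<omega>) 0" for n x \<omega>
  have nA: "norm x = 1" if "x \<in> A" for x using that sph by auto
  have pd: "integrable M (p n x)" "(\<integral>\<omega>. \<bar>p n x \<omega>\<bar> \<partial>M) \<ge> 1/2"
     "blinfun_apply (S (p n x)) x \<ge> (\<integral>\<omega>. \<bar>p n x \<omega>\<bar> \<partial>M) - 2 * \<beta>"
     "\<And>\<omega>. (indicator (Dp M P n) \<omega> - indicator (Dm M P n) \<omega>) * p n x \<omega> = \<bar>p n x \<omega>\<bar>"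
     "\<And>\<omega>. \<omega> \<notin> Dp M P n \<union> Dm M P n \<Longrightarrow> p n x \<omega> = 0" if x: "x \<in> A" for n x
  proof -
    have sx: "blinfun_apply (S (h' n x)) x \<ge> 1 - \<beta>" using est1[OF x] Sh' by simp
    have sy: "\<And>j. j < n \<Longrightarrow> blinfun_apply (S (h' n x)) (- y j) \<ge> 1 - \<beta> * (1/2)^j"
      using est2[OF x] Sh' by (simp add: blinfun.minus_right)
    have syn: "blinfun_apply (S (h' n x)) (y n) \<ge> 1 - \<beta> * (1/2)^n" using est3[OF x] Sh' by simp
    note R = pattern_density[where G=G and P=P and y=y and h="h' n x" and C="2^n" and x=x and n=n and \<beta>=\<beta>,
        OF GI G0 Ps Ppos Pneg ny h'I h'n h'b[OF x] nA[OF x] sx sy syn b0 b1]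
    have pe: "p n x = (\<lambda>\<omega>. indicator (Dp M P n) \<omega> * max (h' n x \<omega>) 0 - indicator (Dm M P n) \<omega> * max (- h' n x \<omega>) 0)"
      by (rule ext) (simp add: p_def)
    show "integrable M (p n x)" unfolding pe by (rule R(1))
    show "(\<integral>\<omega>. \<bar>p n x \<omega>\<bar> \<partial>M) \<ge> 1/2" unfolding pe by (rule R(2))
    show "blinfun_apply (S (p n x)) x \<ge> (\<integral>\<omega>. \<bar>p n x \<omega>\<bar> \<partial>M) - 2 * \<beta>" unfolding pe by (rule R(3))
    show "(indicator (Dp M P n) \<omega> - indicator (Dm M P n) \<omega>) * p n x \<omega> = \<bar>p n x \<omega>\<bar>" for \<omega>
      unfolding pe by (rule R(4))
    show "\<omega> \<notin> Dp M P n \<union> Dm M P n \<Longrightarrow> p n x \<omega> = 0" for \<omega>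
      unfolding pe by (rule R(5))
  qed
  define I where "I n x = (\<integral>\<omega>. \<bar>p n x \<omega>\<bar> \<partial>M)" for n x
  define ph where "ph k x \<omega> = (1 / I (Suc k) x) * p (Suc k) x \<omega>" for k x \<omega>
  define g :: "nat \<Rightarrow> 'm \<Rightarrow> real" where "g k \<omega> = indicator (Dp M P (Suc k)) \<omega> - indicator (Dm M P (Suc k)) \<omega>" for k \<omega>
  have DD: "(Dp M P a \<union> Dm M P a) \<inter> (Dp M P b \<union> Dm M P b) = {}" if ab: "a \<ge> 1" "b \<ge> 1" "a \<noteq> b" for a b
  proof -
    have Psub': "\<And>j. P j \<subseteq> space M" by (rule Psub)
    note d1 = D_disj(1)[where P=P and M=M, OF Psub' ab(1,2)]
    note d2 = D_disj(1)[where P=P and M=M, OF Psub' ab(2,1)]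
    note d3 = D_disj(2)[where P=P and M=M, OF Psub' ab(1,2) ab(3)]
    note d4 = D_disj(3)[where P=P and M=M, OF Psub' ab(1,2) ab(3)]
    show ?thesis using d1 d2 d3 d4 by blast
  qed
  have Dsets: "Dp M P n \<in> sets M" "Dm M P n \<in> sets M" for n using D_sets[OF Ps] by auto
  have gm: "g m \<in> borel_measurable M" for m unfolding g_def using Dsets by measurable
  have gabs: "\<bar>g m \<omega>\<bar> = indicator (Dp M P (Suc m) \<union> Dm M P (Suc m)) \<omega>" for m \<omega>
    unfolding g_def using Dpm_disj[of M P "Suc m"] by (auto simp: indicator_def)
  have gb: "\<bar>g m \<omega>\<bar> \<le> 1" for m \<omega> unfolding gabs by (simp add: indicator_def)
  have gsum: "(\<Sum>m\<le>N. \<bar>g m \<omega>\<bar>) \<le> 1" for N \<omega>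
    unfolding gabs
  proof (rule sum_indicator_le1)
    fix i j :: nat assume "i \<noteq> j"
    then have "Suc i \<noteq> Suc j" by simp
    then show "(Dp M P (Suc i) \<union> Dm M P (Suc i)) \<inter> (Dp M P (Suc j) \<union> Dm M P (Suc j)) = {}"
      using DD[of "Suc i" "Suc j"] by simp
  qed simp
  have Ipos: "I n x \<ge> 1/2" if "x \<in> A" for n x unfolding I_def using pd(2)[OF that] .
  have phI: "integrable M (ph k x)" if x: "x \<in> A" for k x
    unfolding ph_def using pd(1)[OF x] by simp
  have phn: "(\<integral>\<omega>. \<bar>ph k x \<omega>\<bar> \<partial>M) = 1" if x: "x \<in> A" for k x
  proof -
    have "(\<integral>\<omega>. \<bar>ph k x \<omega>\<bar> \<partial>M) = (\<integral>\<omega>. (1 / I (Suc k) x) * \<bar>p (Suc k) x \<omega>\<bar> \<partial>M)"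
      unfolding ph_def using Ipos[OF x, of "Suc k"] by (simp add: abs_mult)
    also have "\<dots> = (1 / I (Suc k) x) * I (Suc k) x" unfolding I_def by simp
    finally show ?thesis using Ipos[OF x, of "Suc k"] by simp
  qed
  have phg: "(\<integral>\<omega>. g k \<omega> * ph k x \<omega> \<partial>M) = 1" if x: "x \<in> A" for k x
  proof -
    have "(\<integral>\<omega>. g k \<omega> * ph k x \<omega> \<partial>M) = (\<integral>\<omega>. (1 / I (Suc k) x) * \<bar>p (Suc k) x \<omega>\<bar> \<partial>M)"
      unfolding ph_def g_def using pd(4)[OF x, of "Suc k"]
      by (intro Bochner_Integration.integral_cong refl) (metis mult.left_commute)
    also have "\<dots> = (1 / I (Suc k) x) * I (Suc k) x" unfolding I_def by simp
    finally show ?thesis using Ipos[OF x, of "Suc k"] by simp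
  qed
  have phz: "g m \<omega> * ph k x \<omega> = 0" if x: "x \<in> A" and mk: "m \<noteq> k" for k m x \<omega>
  proof (cases "\<omega> \<in> Dp M P (Suc k) \<union> Dm M P (Suc k)")
    case True
    have "Suc m \<noteq> Suc k" using mk by simp
    then have "\<omega> \<notin> Dp M P (Suc m) \<union> Dm M P (Suc m)"
    proof -
      have "(Dp M P (Suc m) \<union> Dm M P (Suc m)) \<inter> (Dp M P (Suc k) \<union> Dm M P (Suc k)) = {}"
        using DD[of "Suc m" "Suc k"] \<open>Suc m \<noteq> Suc k\<close> by simp
      then show ?thesis using True by blast
    qed
    then have "g m \<omega> = 0" unfolding g_def by simp
    then show ?thesis by simp
  next
    case False
    then show ?thesis unfolding ph_def using pd(5)[OF x False] by simp
  qed
  have phx: "blinfun_apply (S (ph k x)) x \<ge> 1 - 4 * \<beta>" if x: "x \<in> A" for k x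
  proof -
    define J where "J = I (Suc k) x"
    have J: "J \<ge> 1/2" unfolding J_def by (rule Ipos[OF x])
    have "S (ph k x) = (1 / J) *\<^sub>R S (p (Suc k) x)"
      unfolding ph_def J_def by (rule S_scale[OF pd(1)[OF x]])
    then have eq: "blinfun_apply (S (ph k x)) x = blinfun_apply (S (p (Suc k) x)) x / J"
      by (simp add: blinfun.scaleR_left)
    have "blinfun_apply (S (p (Suc k) x)) x \<ge> J - 2 * \<beta>" using pd(3)[OF x, of "Suc k"] unfolding J_def I_def .
    then have "blinfun_apply (S (p (Suc k) x)) x / J \<ge> (J - 2 * \<beta>) / J" using J by (intro divide_right_mono) auto
    moreover have "(J - 2 * \<beta>) / J \<ge> 1 - 4 * \<beta>"
    proof -
      have "2 * \<beta> / J \<le> 2 * \<beta> / (1/2)" using J b0 by (intro divide_left_mono) auto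
      then have "2 * \<beta> / J \<le> 4 * \<beta>" by simp
      moreover have "(J - 2 * \<beta>) / J = 1 - 2 * \<beta> / J" using J by (simp add: diff_divide_distrib)
      ultimately show ?thesis by simp
    qed
    ultimately show ?thesis using eq by simp
  qed
  show ?thesis
    by (rule c0_abstract[OF gm gb gsum x0 Asym phI phn phg phz phx])
qed

end

theorem lemma4p7:
  fixes M :: "'m measure"
  assumes L1: "dual_isometric_L1 TYPE('a::banach) M"
    and oct: "octahedral TYPE('a)"
    and A_fin: "finite A" and A_sph: "A \<subseteq> sphere (0::'a) 1"
    and eps: "\<epsilon> > 0"
  shows "\<exists>u :: nat \<Rightarrow> (('a \<Rightarrow>\<^sub>L real) \<Rightarrow>\<^sub>L real).
           (\<forall>n. norm (u n) = 1) \<and>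
           (\<forall>n (c::nat \<Rightarrow> real). norm (\<Sum>j\<le>n. c j *\<^sub>R u j) = Max ((\<lambda>j. \<bar>c j\<bar>) ` {..n})) \<and>
           (\<forall>x\<in>A. \<forall>v\<in>closure (span (range u)). norm (canon x + v) > 1 - \<epsilon> + norm v)"
proof -
  obtain T :: "('a \<Rightarrow>\<^sub>L real) \<Rightarrow> 'm \<Rightarrow> real" where
    T1: "\<forall>f g a b. AE x in M. T (a *\<^sub>R f + b *\<^sub>R g) x = a * T f x + b * T g x"
    and T2: "\<forall>f. integrable M (T f) \<and> norm f = (\<integral>x. \<bar>T f x\<bar> \<partial>M)"
    and T3: "\<forall>g. integrable M g \<longrightarrow> (\<exists>f. AE x in M. T f x = g x)"
    using L1 unfolding dual_isometric_L1_def by blast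
  interpret l1d T M
    by unfold_locales (use T1 T2 T3 in auto)
  obtain e :: 'a where ne: "norm e = 1"
  proof -
    have "\<exists>y::'a. norm y = 1 \<and> (\<forall>x\<in>span {}. \<forall>t::real. norm (x + t *\<^sub>R y) \<ge> (1 - 1) * (norm x + \<bar>t\<bar>))"
      using oct unfolding octahedral_def by (metis finite.emptyI zero_less_one)
    then show ?thesis using that by blast
  qed
  define A' where "A' = A \<union> uminus ` A \<union> {e, -e}"
  have finA': "finite A'" unfolding A'_def using A_fin by simp
  have sphA': "A' \<subseteq> sphere 0 1" unfolding A'_def using A_sph ne by auto
  have eA': "e \<in> A'" unfolding A'_def by simp
  have symA': "\<And>x. x \<in> A' \<Longrightarrow> -x \<in> A'" unfolding A'_def by auto
  define \<beta> where "\<beta> = min (\<epsilon> / 8) (1/10)"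
  have b0: "0 < \<beta>" unfolding \<beta>_def using eps by simp
  have b1: "\<beta> \<le> 1/10" unfolding \<beta>_def by simp
  have b2: "4 * \<beta> < \<epsilon>" unfolding \<beta>_def using eps by linarith
  obtain u :: "nat \<Rightarrow> (('a \<Rightarrow>\<^sub>L real) \<Rightarrow>\<^sub>L real)" where
    u1: "\<forall>n. norm (u n) = 1"
    and u2: "\<forall>n (c::nat \<Rightarrow> real). norm (\<Sum>j\<le>n. c j *\<^sub>R u j) = Max ((\<lambda>j. \<bar>c j\<bar>) ` {..n})"
    and u3: "\<forall>x\<in>A'. \<forall>v\<in>closure (span (range u)). norm (canon x + v) \<ge> 1 - 4 * \<beta> + norm v"
    using final_l1d[OF oct finA' sphA' eA' symA' b0 b1] by blast
  have "\<forall>x\<in>A. \<forall>v\<in>closure (span (range u)). norm (canon x + v) > 1 - \<epsilon> + norm v"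
  proof (intro ballI)
    fix x v assume x: "x \<in> A" and v: "v \<in> closure (span (range u))"
    have "x \<in> A'" using x unfolding A'_def by simp
    then have "norm (canon x + v) \<ge> 1 - 4 * \<beta> + norm v" using u3 v by blast
    then show "norm (canon x + v) > 1 - \<epsilon> + norm v" using b2 by linarith
  qed
  then show ?thesis using u1 u2 by blast
qed


end
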